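(* Let $(\mathcal{T},[1],\Delta)$ be a triangulated category, let $\mathcal{N}$ be a triangulated subcategory of $\mathcal{T}$, and let $(\mathcal{U},\mathcal{X},\mathcal{V})$ be an $\mathcal{N}$-localization triple in $\mathcal{T}$. (i) If $\mathcal{U}\cap\mathcal{V}$ is a Frobenius special $\mathcal{X}$-monic closed subcategory of $\mathcal{T}$, then $(\mathcal{U},\mathcal{X},\mathcal{V})$ satisfies the Verdier condition. (ii) If $\mathcal{U}\cap\mathcal{V}$ is a Frobenius special $\mathcal{X}$-epic closed subcategory of $\mathcal{T}$, then $(\mathcal{U},\mathcal{X},\mathcal{V})$ satisfies the Verdier condition.
   Context: $\Delta$ denotes the class of distinguished triangles of $\mathcal{T}$. All subcategories are full, additive and closed under isomorphisms. For additive subcategories $\mathcal{X}\subseteq\mathcal{C}$ of $\mathcal{T}$, the factor category $\mathcal{C}/[\mathcal{X}]$ has the objects of $\mathcal{C}$ and $\mathrm{Hom}_{\mathcal{C}/[\mathcal{X}]}(A,B)=\mathrm{Hom}_{\mathcal{T}}(A,B)/\mathcal{X}(A,B)$, where $\mathcal{X}(A,B)$ consists of the morphisms factoring through an object of $\mathcal{X}$; $\underline{f}$ denotes the class of $f$. For a subcategory $\mathcal{Y}$, a morphism $f\colon A\to B$ is $\mathcal{Y}$-monic if $\mathrm{Hom}_{\mathcal{T}}(B,Y)\to\mathrm{Hom}_{\mathcal{T}}(A,Y)$, $g\mapsto gf$, is surjective for all $Y\in\mathcal{Y}$, and $\mathcal{Y}$-epic dually; a $\mathcal{Y}$-preenvelope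 of $A$ is a $\mathcal{Y}$-monic $A\to Y$ with $Y\in\mathcal{Y}$, and a $\mathcal{Y}$-precover of $A$ is a $\mathcal{Y}$-epic $Y\to A$ with $Y\in\mathcal{Y}$. Special $\mathcal{X}$-monic closed: an additive subcategory $\mathcal{C}\supseteq\mathcal{X}$ such that (a) for every $A\in\mathcal{C}$ there is a triangle $A\xrightarrow{i}X\to U\to A[1]$ in $\Delta$ with $U\in\mathcal{C}$ and $i$ an $\mathcal{X}$-preenvelope; (b) whenever $A\xrightarrow{i}X\to U\to A[1]$ is in $\Delta$ with $A,U\in\mathcal{C}$ and $i$ an $\mathcal{X}$-preenvelope, then for every morphism $f\colon A\to B$ in $\mathcal{C}$ there is a triangle $A\xrightarrow{\binom{i}{f}}X\oplus B\to N\to A[1]$ in $\Delta$ with $N\in\mathcal{C}$. Special $\mathcal{X}$-epic closed is the dual notion: $\mathcal{X}\subseteq\mathcal{C}$, every $A\in\mathcal{C}$ admits a triangle $U\to X\xrightarrow{\pi}A\to U[1]$ in $\Delta$ with $U\in\mathcal{C}$ and $\pi$ an $\mathcal{X}$-precover, and for any such triangle and any morphism $f\colon B\to A$ in $\mathcal{C}$ there is a triangle $N\to X\oplus B\xrightarrow{(\pi\ f)}A\to N[1]$ in $\Delta$ with $N\in\mathcal{C}$. A special $\mathcal{X}$-monic closed $\mathcal{C}$ is Frobenius if (a) for each $A\in\mathcal{C}$ there is a triangle $K\xrightarrow{u}X\xrightarrow{v}A\to K[1]$ in $\Delta$ with $K\in\mathcal{C}$ and $u$ an $\mathcal{X}$-preenvelope,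 and (b) for each $A\in\mathcal{C}$ the triangle $A\xrightarrow{i^A}X^A\xrightarrow{p^A}U^A\to A[1]$ of (a) in the definition of special $\mathcal{X}$-monic closed (chosen and fixed for each $A$) has $p^A$ an $\mathcal{X}$-precover. Dually, a special $\mathcal{X}$-epic closed $\mathcal{C}$ is Frobenius if for each $A\in\mathcal{C}$ there is a triangle $A\xrightarrow{}X\xrightarrow{v}K\to A[1]$ in $\Delta$ with $K\in\mathcal{C}$ and $v$ an $\mathcal{X}$-precover, and the fixed triangles $U_A\xrightarrow{\iota_A}X_A\xrightarrow{\pi_A}A\to U_A[1]$ ($\pi_A$ an $\mathcal{X}$-precover, $U_A\in\mathcal{C}$) have $\iota_A$ an $\mathcal{X}$-preenvelope. For additive subcategories $\mathcal{U},\mathcal{V}\supseteq\mathcal{X}$ of an additive subcategory $\mathcal{A}$, put $\mathcal{U}^{\perp_{\mathcal{A}/[\mathcal{X}]}}=\{W\in\mathcal{A}:\mathrm{Hom}_{\mathcal{A}/[\mathcal{X}]}(\mathcal{U},W)=0\}$ and ${}^{\perp_{\mathcal{A}/[\mathcal{X}]}}\mathcal{V}=\{W\in\mathcal{A}:\mathrm{Hom}_{\mathcal{A}/[\mathcal{X}]}(W,\mathcal{V})=0\}$. A triple $(\mathcal{U},\mathcal{X},\mathcal{V})$ with $\mathcal{X}\subseteq\mathcal{U}\cap\mathcal{V}$ and $\mathcal{U},\mathcal{V}\subseteq\mathcal{A}$ is a localization triple of $\mathcal{A}$ if: (a) each $A\in\mathcal{A}$ admits a triangle $A[-1]\to W_A\to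 Q(A)\xrightarrow{r_A}A$ in $\Delta$ with $r_A$ a $\mathcal{U}$-precover and $W_A\in\mathcal{U}^{\perp_{\mathcal{A}/[\mathcal{X}]}}$; (b) each $A\in\mathcal{A}$ admits a triangle $A\xrightarrow{j^A}R(A)\to W^A\to A[1]$ in $\Delta$ with $j^A$ a $\mathcal{V}$-preenvelope and $W^A\in{}^{\perp_{\mathcal{A}/[\mathcal{X}]}}\mathcal{V}$; (c) if $A\in\mathcal{V}$ then $Q(A)\in\mathcal{U}\cap\mathcal{V}$ and $W_A\in(\mathcal{U}\cap\mathcal{V})^{\perp_{\mathcal{V}/[\mathcal{X}]}}$, and if $A\in\mathcal{U}$ then $R(A)\in\mathcal{U}\cap\mathcal{V}$ and $W^A\in{}^{\perp_{\mathcal{U}/[\mathcal{X}]}}(\mathcal{U}\cap\mathcal{V})$. A localization triple $(\mathcal{U},\mathcal{X},\mathcal{V})$ of $\mathcal{T}$ is an $\mathcal{N}$-localization triple if $\mathcal{X}=\mathcal{U}\cap\mathcal{V}\cap\mathcal{N}$ and $\mathcal{U}^{\perp_{\mathcal{T}/[\mathcal{X}]}}\subseteq\mathcal{N}$, ${}^{\perp_{\mathcal{T}/[\mathcal{X}]}}\mathcal{V}\subseteq\mathcal{N}$. It satisfies the Verdier condition if for every triangle $A\xrightarrow{s}B\to N\to A[1]$ in $\Delta$ with $A,B\in\mathcal{U}\cap\mathcal{V}$ and $N\in\mathcal{N}$, the class $\underline{s}$ is an isomorphism in $(\mathcal{U}\cap\mathcal{V})/[\mathcal{X}]$. *)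

theory Defs
  imports Main
begin

text \<open>A (locally small) category whose objects are all elements of the type 'o,
  with arrows in the carrier set Arr, domain/codomain maps, composition
  (Cmp g f = g after f), identities, additive structure on hom-sets,
  a shift functor [1] (Sh on objects, ShM on arrows), and a class Tri of
  distinguished triangles, each recorded as a triple (u,v,w) with
  u : X -> Y, v : Y -> Z, w : Z -> X[1].\<close>

record ('o,'m) tcat =
  Arr :: "'m set"
  Dom :: "'m \<Rightarrow> 'o"
  Cod :: "'m \<Rightarrow> 'o"
  Cmp :: "'m \<Rightarrow> 'm \<Rightarrow> 'm"
  Idm :: "'o \<Rightarrow> 'm"
  Addm :: "'m \<Rightarrow> 'm \<Rightarrow> 'm"
  Zerom :: "'o \<Rightarrow> 'o \<Rightarrow> 'm"
  Negm :: "'m \<Rightarrow> 'm"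
  Sh :: "'o \<Rightarrow> 'o"
  ShM :: "'m \<Rightarrow> 'm"
  Tri :: "('m \<times> 'm \<times> 'm) set"

definition Hom :: "('o,'m) tcat \<Rightarrow> 'o \<Rightarrow> 'o \<Rightarrow> 'm set" where
  "Hom T A B = {f \<in> Arr T. Dom T f = A \<and> Cod T f = B}"

definition category :: "('o,'m) tcat \<Rightarrow> bool" where
  "category T \<longleftrightarrow>
     (\<forall>A. Idm T A \<in> Hom T A A) \<and>
     (\<forall>A B C f g. f \<in> Hom T A B \<longrightarrow> g \<in> Hom T B C \<longrightarrow> Cmp T g f \<in> Hom T A C) \<and>
     (\<forall>A B C D f g h. f \<in> Hom T A B \<longrightarrow> g \<in> Hom T B C \<longrightarrow> h \<in> Hom T C D \<longrightarrow>
         Cmp T h (Cmp T g f) = Cmp T (Cmp T h g) f) \<and>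
     (\<forall>A B f. f \<in> Hom T A B \<longrightarrow> Cmp T f (Idm T A) = f \<and> Cmp T (Idm T B) f = f)"

definition preadditive :: "('o,'m) tcat \<Rightarrow> bool" where
  "preadditive T \<longleftrightarrow> category T \<and>
     (\<forall>A B. Zerom T A B \<in> Hom T A B \<and>
        (\<forall>f\<in>Hom T A B. \<forall>g\<in>Hom T A B. Addm T f g \<in> Hom T A B) \<and>
        (\<forall>f\<in>Hom T A B. Negm T f \<in> Hom T A B) \<and>
        (\<forall>f\<in>Hom T A B. \<forall>g\<in>Hom T A B. \<forall>h\<in>Hom T A B.
            Addm T (Addm T f g) h = Addm T f (Addm T g h)) \<and>
        (\<forall>f\<in>Hom T A B. \<forall>g\<in>Hom T A B. Addm T f g = Addm T g f) \<and>
        (\<forall>f\<in>Hom T A B. Addm T f (Zerom T A B) = f) \<and>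
        (\<forall>f\<in>Hom T A B. Addm T f (Negm T f) = Zerom T A B)) \<and>
     (\<forall>A B C f g h. f \<in> Hom T A B \<longrightarrow> g \<in> Hom T A B \<longrightarrow> h \<in> Hom T B C \<longrightarrow>
         Cmp T h (Addm T f g) = Addm T (Cmp T h f) (Cmp T h g)) \<and>
     (\<forall>A B C f g h. f \<in> Hom T B C \<longrightarrow> g \<in> Hom T B C \<longrightarrow> h \<in> Hom T A B \<longrightarrow>
         Cmp T (Addm T f g) h = Addm T (Cmp T f h) (Cmp T g h))"

definition is_zero_obj :: "('o,'m) tcat \<Rightarrow> 'o \<Rightarrow> bool" where
  "is_zero_obj T Z \<longleftrightarrow> (\<forall>A. (\<exists>!f. f \<in> Hom T Z A) \<and> (\<exists>!f. f \<in> Hom T A Z))"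

definition biprod :: "('o,'m) tcat \<Rightarrow> 'o \<Rightarrow> 'o \<Rightarrow> 'o \<Rightarrow> 'm \<Rightarrow> 'm \<Rightarrow> 'm \<Rightarrow> 'm \<Rightarrow> bool" where
  "biprod T A B P p1 p2 i1 i2 \<longleftrightarrow>
     p1 \<in> Hom T P A \<and> p2 \<in> Hom T P B \<and> i1 \<in> Hom T A P \<and> i2 \<in> Hom T B P \<and>
     Cmp T p1 i1 = Idm T A \<and> Cmp T p2 i2 = Idm T B \<and>
     Cmp T p1 i2 = Zerom T B A \<and> Cmp T p2 i1 = Zerom T A B \<and>
     Addm T (Cmp T i1 p1) (Cmp T i2 p2) = Idm T P"

definition additive :: "('o,'m) tcat \<Rightarrow> bool" where
  "additive T \<longleftrightarrow> preadditive T \<and> (\<exists>Z. is_zero_obj T Z) \<and>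
     (\<forall>A B. \<exists>P p1 p2 i1 i2. biprod T A B P p1 p2 i1 i2)"

definition iso :: "('o,'m) tcat \<Rightarrow> 'm \<Rightarrow> bool" where
  "iso T f \<longleftrightarrow> f \<in> Arr T \<and> (\<exists>g \<in> Hom T (Cod T f) (Dom T f).
      Cmp T g f = Idm T (Dom T f) \<and> Cmp T f g = Idm T (Cod T f))"

definition shift_ok :: "('o,'m) tcat \<Rightarrow> bool" where
  "shift_ok T \<longleftrightarrow>
     (\<forall>A B f. f \<in> Hom T A B \<longrightarrow> ShM T f \<in> Hom T (Sh T A) (Sh T B)) \<and>
     (\<forall>A. ShM T (Idm T A) = Idm T (Sh T A)) \<and>
     (\<forall>A B C f g. f \<in> Hom T A B \<longrightarrow> g \<in> Hom T B C \<longrightarrow>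
         ShM T (Cmp T g f) = Cmp T (ShM T g) (ShM T f)) \<and>
     (\<forall>A B f g. f \<in> Hom T A B \<longrightarrow> g \<in> Hom T A B \<longrightarrow>
         ShM T (Addm T f g) = Addm T (ShM T f) (ShM T g)) \<and>
     (\<forall>A B. bij_betw (ShM T) (Hom T A B) (Hom T (Sh T A) (Sh T B))) \<and>
     (\<forall>B. \<exists>A f. f \<in> Hom T (Sh T A) B \<and> iso T f)"

definition is_tri :: "('o,'m) tcat \<Rightarrow> 'm \<Rightarrow> 'm \<Rightarrow> 'm \<Rightarrow> bool" where
  "is_tri T u v w \<longleftrightarrow> u \<in> Arr T \<and> v \<in> Arr T \<and> w \<in> Arr T \<and>
     Cod T u = Dom T v \<and> Cod T v = Dom T w \<and> Cod T w = Sh T (Dom T u)"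

definition tri_morph :: "('o,'m) tcat \<Rightarrow> 'm \<Rightarrow> 'm \<Rightarrow> 'm \<Rightarrow> 'm \<Rightarrow> 'm \<Rightarrow> 'm
     \<Rightarrow> 'm \<Rightarrow> 'm \<Rightarrow> 'm \<Rightarrow> bool" where
  "tri_morph T u v w u' v' w' a b c \<longleftrightarrow> is_tri T u v w \<and> is_tri T u' v' w' \<and>
     a \<in> Hom T (Dom T u) (Dom T u') \<and> b \<in> Hom T (Dom T v) (Dom T v') \<and>
     c \<in> Hom T (Dom T w) (Dom T w') \<and>
     Cmp T b u = Cmp T u' a \<and> Cmp T c v = Cmp T v' b \<and> Cmp T (ShM T a) w = Cmp T w' c"

definition triangulated :: "('o,'m) tcat \<Rightarrow> bool" where
  "triangulated T \<longleftrightarrow> additive T \<and> shift_ok T \<and>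
     \<comment> \<open>TR1\<close>
     (\<forall>u v w. (u,v,w) \<in> Tri T \<longrightarrow> is_tri T u v w) \<and>
     (\<forall>u v w u' v' w' a b c. (u,v,w) \<in> Tri T \<and> tri_morph T u v w u' v' w' a b c \<and>
         iso T a \<and> iso T b \<and> iso T c \<longrightarrow> (u',v',w') \<in> Tri T) \<and>
     (\<forall>A. \<exists>Z. is_zero_obj T Z \<and> (Idm T A, Zerom T A Z, Zerom T Z (Sh T A)) \<in> Tri T) \<and>
     (\<forall>u \<in> Arr T. \<exists>v w. (u,v,w) \<in> Tri T) \<and>
     \<comment> \<open>TR2\<close>
     (\<forall>u v w. is_tri T u v w \<longrightarrow>
         ((u,v,w) \<in> Tri T \<longleftrightarrow> (v, w, Negm T (ShM T u)) \<in> Tri T)) \<and>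
     \<comment> \<open>TR3\<close>
     (\<forall>u v w u' v' w' a b. (u,v,w) \<in> Tri T \<and> (u',v',w') \<in> Tri T \<and>
         a \<in> Hom T (Dom T u) (Dom T u') \<and> b \<in> Hom T (Cod T u) (Cod T u') \<and>
         Cmp T b u = Cmp T u' a \<longrightarrow> (\<exists>c. tri_morph T u v w u' v' w' a b c)) \<and>
     \<comment> \<open>TR4 (octahedral axiom)\<close>
     (\<forall>u1 j k u2 l i m n. (u1,j,k) \<in> Tri T \<and> (u2,l,i) \<in> Tri T \<and>
         Cod T u1 = Dom T u2 \<and> (Cmp T u2 u1, m, n) \<in> Tri T \<longrightarrow>
         (\<exists>f g. (f, g, Cmp T (ShM T j) i) \<in> Tri T \<and>
            Cmp T f j = Cmp T m u2 \<and> Cmp T n f = k \<and>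
            Cmp T g m = l \<and> Cmp T i g = Cmp T (ShM T u1) n))"

text \<open>Subcategories: full, additive, closed under isomorphisms (given by their object sets).\<close>
definition subcat :: "('o,'m) tcat \<Rightarrow> 'o set \<Rightarrow> bool" where
  "subcat T S \<longleftrightarrow> (\<forall>f. iso T f \<and> Dom T f \<in> S \<longrightarrow> Cod T f \<in> S) \<and>
     (\<exists>Z \<in> S. is_zero_obj T Z) \<and>
     (\<forall>A B P p1 p2 i1 i2. A \<in> S \<and> B \<in> S \<and> biprod T A B P p1 p2 i1 i2 \<longrightarrow> P \<in> S)"

definition tri_subcat :: "('o,'m) tcat \<Rightarrow> 'o set \<Rightarrow> bool" where
  "tri_subcat T N \<longleftrightarrow> subcat T N \<and> (\<forall>A. A \<in> N \<longleftrightarrow> Sh T A \<in> N) \<and>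
     (\<forall>u v w. (u,v,w) \<in> Tri T \<and> Dom T u \<in> N \<and> Cod T u \<in> N \<longrightarrow> Cod T v \<in> N)"

definition factors :: "('o,'m) tcat \<Rightarrow> 'o set \<Rightarrow> 'm \<Rightarrow> bool" where
  "factors T X f \<longleftrightarrow> (\<exists>W \<in> X. \<exists>g h. g \<in> Hom T (Dom T f) W \<and> h \<in> Hom T W (Cod T f) \<and>
      f = Cmp T h g)"

definition diffm :: "('o,'m) tcat \<Rightarrow> 'm \<Rightarrow> 'm \<Rightarrow> 'm" where
  "diffm T f g = Addm T f (Negm T g)"

text \<open>The class of s is an isomorphism in the factor category modulo [X].\<close>
definition q_iso :: "('o,'m) tcat \<Rightarrow> 'o set \<Rightarrow> 'm \<Rightarrow> bool" where
  "q_iso T X s \<longleftrightarrow> s \<in> Arr T \<and> (\<exists>g \<in> Hom T (Cod T s) (Dom T s).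
      factors T X (diffm T (Cmp T g s) (Idm T (Dom T s))) \<and>
      factors T X (diffm T (Cmp T s g) (Idm T (Cod T s))))"

definition monic_wrt :: "('o,'m) tcat \<Rightarrow> 'o set \<Rightarrow> 'm \<Rightarrow> bool" where
  "monic_wrt T Y f \<longleftrightarrow> f \<in> Arr T \<and>
     (\<forall>Y0 \<in> Y. \<forall>g \<in> Hom T (Dom T f) Y0. \<exists>h \<in> Hom T (Cod T f) Y0. Cmp T h f = g)"

definition epic_wrt :: "('o,'m) tcat \<Rightarrow> 'o set \<Rightarrow> 'm \<Rightarrow> bool" where
  "epic_wrt T Y f \<longleftrightarrow> f \<in> Arr T \<and>
     (\<forall>Y0 \<in> Y. \<forall>g \<in> Hom T Y0 (Cod T f). \<exists>h \<in> Hom T Y0 (Dom T f). Cmp T f h = g)"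

definition preenv :: "('o,'m) tcat \<Rightarrow> 'o set \<Rightarrow> 'm \<Rightarrow> bool" where
  "preenv T Y f \<longleftrightarrow> monic_wrt T Y f \<and> Cod T f \<in> Y"

definition precov :: "('o,'m) tcat \<Rightarrow> 'o set \<Rightarrow> 'm \<Rightarrow> bool" where
  "precov T Y f \<longleftrightarrow> epic_wrt T Y f \<and> Dom T f \<in> Y"

definition special_monic_closed :: "('o,'m) tcat \<Rightarrow> 'o set \<Rightarrow> 'o set \<Rightarrow> bool" where
  "special_monic_closed T X C \<longleftrightarrow> subcat T C \<and> X \<subseteq> C \<and>
     (\<forall>A \<in> C. \<exists>i p q. (i,p,q) \<in> Tri T \<and> Dom T i = A \<and> preenv T X i \<and> Cod T p \<in> C) \<and>
     (\<forall>i p q f. (i,p,q) \<in> Tri T \<and> Dom T i \<in> C \<and> Cod T p \<in> C \<and> preenv T X i \<and>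
         f \<in> Arr T \<and> Dom T f = Dom T i \<and> Cod T f \<in> C \<longrightarrow>
         (\<exists>P p1 p2 i1 i2 h v w. biprod T (Cod T i) (Cod T f) P p1 p2 i1 i2 \<and>
            h \<in> Hom T (Dom T i) P \<and> Cmp T p1 h = i \<and> Cmp T p2 h = f \<and>
            (h,v,w) \<in> Tri T \<and> Cod T v \<in> C))"

definition special_epic_closed :: "('o,'m) tcat \<Rightarrow> 'o set \<Rightarrow> 'o set \<Rightarrow> bool" where
  "special_epic_closed T X C \<longleftrightarrow> subcat T C \<and> X \<subseteq> C \<and>
     (\<forall>A \<in> C. \<exists>\<iota> \<pi> q. (\<iota>,\<pi>,q) \<in> Tri T \<and> Cod T \<pi> = A \<and> precov T X \<pi> \<and> Dom T \<iota> \<in> C) \<and>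
     (\<forall>\<iota> \<pi> q f. (\<iota>,\<pi>,q) \<in> Tri T \<and> Dom T \<iota> \<in> C \<and> Cod T \<pi> \<in> C \<and> precov T X \<pi> \<and>
         f \<in> Arr T \<and> Cod T f = Cod T \<pi> \<and> Dom T f \<in> C \<longrightarrow>
         (\<exists>P p1 p2 i1 i2 h a w. biprod T (Dom T \<pi>) (Dom T f) P p1 p2 i1 i2 \<and>
            h \<in> Hom T P (Cod T \<pi>) \<and> Cmp T h i1 = \<pi> \<and> Cmp T h i2 = f \<and>
            (a,h,w) \<in> Tri T \<and> Dom T a \<in> C))"

text \<open>Frobenius: the fixed triangles of (a) are taken to be some choice of such triangles;
  as a hypothesis this is expressed by existence for each object.\<close>
definition frob_monic :: "('o,'m) tcat \<Rightarrow> 'o set \<Rightarrow> 'o set \<Rightarrow> bool" where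
  "frob_monic T X C \<longleftrightarrow> special_monic_closed T X C \<and>
     (\<forall>A \<in> C. \<exists>u v w. (u,v,w) \<in> Tri T \<and> Cod T v = A \<and> Dom T u \<in> C \<and> preenv T X u) \<and>
     (\<forall>A \<in> C. \<exists>i p q. (i,p,q) \<in> Tri T \<and> Dom T i = A \<and> preenv T X i \<and> Cod T p \<in> C \<and>
         precov T X p)"

definition frob_epic :: "('o,'m) tcat \<Rightarrow> 'o set \<Rightarrow> 'o set \<Rightarrow> bool" where
  "frob_epic T X C \<longleftrightarrow> special_epic_closed T X C \<and>
     (\<forall>A \<in> C. \<exists>u v w. (u,v,w) \<in> Tri T \<and> Dom T u = A \<and> Cod T v \<in> C \<and> precov T X v) \<and>
     (\<forall>A \<in> C. \<exists>\<iota> \<pi> q. (\<iota>,\<pi>,q) \<in> Tri T \<and> Cod T \<pi> = A \<and> precov T X \<pi> \<and> Dom T \<iota> \<in> C \<and>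
         preenv T X \<iota>)"

text \<open>Perpendicular categories inside the factor category Amb/[X].\<close>
definition perpR :: "('o,'m) tcat \<Rightarrow> 'o set \<Rightarrow> 'o set \<Rightarrow> 'o set \<Rightarrow> 'o set" where
  "perpR T Amb X S = {W \<in> Amb. \<forall>S0 \<in> S. \<forall>f \<in> Hom T S0 W. factors T X f}"

definition perpL :: "('o,'m) tcat \<Rightarrow> 'o set \<Rightarrow> 'o set \<Rightarrow> 'o set \<Rightarrow> 'o set" where
  "perpL T Amb X S = {W \<in> Amb. \<forall>S0 \<in> S. \<forall>f \<in> Hom T W S0. factors T X f}"

text \<open>Localization triple of T. The triangle A[-1] -> W_A -> Q(A) -> A is rendered as a
  distinguished triangle X' -> W_A -> Q(A) -c-> X'[1] with an isomorphism theta : X'[1] -> A,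
  r_A = theta o c.\<close>
definition loc_triple :: "('o,'m) tcat \<Rightarrow> 'o set \<Rightarrow> 'o set \<Rightarrow> 'o set \<Rightarrow> bool" where
  "loc_triple T U X V \<longleftrightarrow> X \<subseteq> U \<inter> V \<and>
     (\<forall>A. \<exists>a b c \<theta>. (a,b,c) \<in> Tri T \<and> \<theta> \<in> Hom T (Sh T (Dom T a)) A \<and> iso T \<theta> \<and>
         precov T U (Cmp T \<theta> c) \<and> Cod T a \<in> perpR T UNIV X U \<and>
         (A \<in> V \<longrightarrow> Cod T b \<in> U \<inter> V \<and> Cod T a \<in> perpR T V X (U \<inter> V))) \<and>
     (\<forall>A. \<exists>j v w. (j,v,w) \<in> Tri T \<and> Dom T j = A \<and> preenv T V j \<and>
         Cod T v \<in> perpL T UNIV X V \<and>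
         (A \<in> U \<longrightarrow> Cod T j \<in> U \<inter> V \<and> Cod T v \<in> perpL T U X (U \<inter> V)))"

definition N_loc_triple :: "('o,'m) tcat \<Rightarrow> 'o set \<Rightarrow> 'o set \<Rightarrow> 'o set \<Rightarrow> 'o set \<Rightarrow> bool" where
  "N_loc_triple T U X V N \<longleftrightarrow> loc_triple T U X V \<and> X = U \<inter> V \<inter> N \<and>
     perpR T UNIV X U \<subseteq> N \<and> perpL T UNIV X V \<subseteq> N"

definition verdier :: "('o,'m) tcat \<Rightarrow> 'o set \<Rightarrow> 'o set \<Rightarrow> 'o set \<Rightarrow> 'o set \<Rightarrow> bool" where
  "verdier T U X V N \<longleftrightarrow> (\<forall>s v w. (s,v,w) \<in> Tri T \<and> Dom T s \<in> U \<inter> V \<and>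
     Cod T s \<in> U \<inter> V \<and> Cod T v \<in> N \<longrightarrow> q_iso T X s)"

end

theory Submission
  imports Defs
begin

locale TC =
  fixes T :: "('o,'m) tcat"
  assumes tri: "triangulated T"
begin

lemma addv: "additive T" using tri[unfolded triangulated_def] by (rule conjunct1)
lemma sh: "shift_ok T" using tri[unfolded triangulated_def] by blast
lemma pre: "preadditive T" using addv[unfolded additive_def] by (rule conjunct1)
lemma cat: "category T" using pre[unfolded preadditive_def] by (rule conjunct1)

lemma idm[simp]: "Idm T A \<in> Hom T A A" using cat unfolding category_def by blast
lemma cmp: "f \<in> Hom T A B \<Longrightarrow> g \<in> Hom T B C \<Longrightarrow> Cmp T g f \<in> Hom T A C"
  using cat unfolding category_def by blast
lemma assoc: "f \<in> Hom T A B \<Longrightarrow> g \<in> Hom T B C \<Longrightarrow> h \<in> Hom T C D \<Longrightarrow>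
         Cmp T h (Cmp T g f) = Cmp T (Cmp T h g) f"
  using cat unfolding category_def by blast
lemma idr: "f \<in> Hom T A B \<Longrightarrow> Cmp T f (Idm T A) = f"
  using cat unfolding category_def by blast
lemma idl: "f \<in> Hom T A B \<Longrightarrow> Cmp T (Idm T B) f = f"
  using cat unfolding category_def by blast
lemma preAB: "Zerom T A B \<in> Hom T A B \<and>
        (\<forall>f\<in>Hom T A B. \<forall>g\<in>Hom T A B. Addm T f g \<in> Hom T A B) \<and>
        (\<forall>f\<in>Hom T A B. Negm T f \<in> Hom T A B) \<and>
        (\<forall>f\<in>Hom T A B. \<forall>g\<in>Hom T A B. \<forall>h\<in>Hom T A B.
            Addm T (Addm T f g) h = Addm T f (Addm T g h)) \<and>
        (\<forall>f\<in>Hom T A B. \<forall>g\<in>Hom T A B. Addm T f g = Addm T g f) \<and>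
        (\<forall>f\<in>Hom T A B. Addm T f (Zerom T A B) = f) \<and>
        (\<forall>f\<in>Hom T A B. Addm T f (Negm T f) = Zerom T A B)"
  using conjunct1[OF conjunct2[OF pre[unfolded preadditive_def]]] by blast
lemma dists: "(\<forall>A B C f g h. f \<in> Hom T A B \<longrightarrow> g \<in> Hom T A B \<longrightarrow> h \<in> Hom T B C \<longrightarrow>
         Cmp T h (Addm T f g) = Addm T (Cmp T h f) (Cmp T h g)) \<and>
     (\<forall>A B C f g h. f \<in> Hom T B C \<longrightarrow> g \<in> Hom T B C \<longrightarrow> h \<in> Hom T A B \<longrightarrow>
         Cmp T (Addm T f g) h = Addm T (Cmp T f h) (Cmp T g h))"
  using conjunct2[OF conjunct2[OF pre[unfolded preadditive_def]]] .

lemma zero[simp]: "Zerom T A B \<in> Hom T A B" using preAB by (rule conjunct1)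
lemma add: "f \<in> Hom T A B \<Longrightarrow> g \<in> Hom T A B \<Longrightarrow> Addm T f g \<in> Hom T A B"
  using preAB[of A B] by blast
lemma neg: "f \<in> Hom T A B \<Longrightarrow> Negm T f \<in> Hom T A B"
  using preAB[of A B] by blast
lemma add_assoc: "f \<in> Hom T A B \<Longrightarrow> g \<in> Hom T A B \<Longrightarrow> h \<in> Hom T A B \<Longrightarrow>
            Addm T (Addm T f g) h = Addm T f (Addm T g h)"
  using preAB[of A B] by blast
lemma add_comm: "f \<in> Hom T A B \<Longrightarrow> g \<in> Hom T A B \<Longrightarrow> Addm T f g = Addm T g f"
  using preAB[of A B] by blast
lemma add_zero: "f \<in> Hom T A B \<Longrightarrow> Addm T f (Zerom T A B) = f"
  using preAB[of A B] by blast
lemma add_neg: "f \<in> Hom T A B \<Longrightarrow> Addm T f (Negm T f) = Zerom T A B"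
  using preAB[of A B] by blast
lemma distl: "f \<in> Hom T A B \<Longrightarrow> g \<in> Hom T A B \<Longrightarrow> h \<in> Hom T B C \<Longrightarrow>
         Cmp T h (Addm T f g) = Addm T (Cmp T h f) (Cmp T h g)"
  using dists by blast
lemma distr: "f \<in> Hom T B C \<Longrightarrow> g \<in> Hom T B C \<Longrightarrow> h \<in> Hom T A B \<Longrightarrow>
         Cmp T (Addm T f g) h = Addm T (Cmp T f h) (Cmp T g h)"
  using dists by blast

lemma zero_add: "f \<in> Hom T A B \<Longrightarrow> Addm T (Zerom T A B) f = f"
  using add_comm[OF zero, of f A B] add_zero[of f A B] by simp

lemma cancel_left: assumes "f \<in> Hom T A B" "x \<in> Hom T A B" "y \<in> Hom T A B"
  and "Addm T f x = Addm T f y" shows "x = y"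
proof -
  have nf: "Negm T f \<in> Hom T A B" using neg assms by blast
  have e: "Addm T (Negm T f) f = Zerom T A B"
    using add_comm[OF nf assms(1)] add_neg[OF assms(1)] by simp
  have "x = Addm T (Addm T (Negm T f) f) x" using e zero_add assms by simp
  also have "\<dots> = Addm T (Negm T f) (Addm T f x)" by (rule add_assoc[OF nf assms(1,2)])
  also have "\<dots> = Addm T (Negm T f) (Addm T f y)" using assms by simp
  also have "\<dots> = Addm T (Addm T (Negm T f) f) y" by (rule add_assoc[OF nf assms(1,3), symmetric])
  also have "\<dots> = y" using e zero_add assms by simp
  finally show ?thesis .
qed

lemma idem_zero: "x \<in> Hom T A B \<Longrightarrow> Addm T x x = x \<Longrightarrow> x = Zerom T A B"
  using cancel_left[of x A B x "Zerom T A B"] add_zero[of x A B] by simp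

lemma inv_unique: "x \<in> Hom T A B \<Longrightarrow> y \<in> Hom T A B \<Longrightarrow> Addm T x y = Zerom T A B \<Longrightarrow> y = Negm T x"
  using cancel_left[of x A B y "Negm T x"] add_neg[of x A B] neg[of x A B] by simp

lemma neg_neg: "x \<in> Hom T A B \<Longrightarrow> Negm T (Negm T x) = x"
  using inv_unique[of "Negm T x" A B x] neg[of x A B] add_comm[of "Negm T x" A B x] add_neg[of x A B]
  by simp

lemma neg_zero: "Negm T (Zerom T A B) = Zerom T A B"
  using inv_unique[of "Zerom T A B" A B "Zerom T A B"] add_zero[of "Zerom T A B" A B] by simp

lemma cmp_zero_r: "f \<in> Hom T A B \<Longrightarrow> Cmp T f (Zerom T C A) = Zerom T C B"
  using idem_zero[of "Cmp T f (Zerom T C A)" C B] distl[of "Zerom T C A" C A "Zerom T C A" f B]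
    add_zero[of "Zerom T C A" C A] cmp[of "Zerom T C A" C A f B] by simp
lemma cmp_zero_l: "f \<in> Hom T A B \<Longrightarrow> Cmp T (Zerom T B C) f = Zerom T A C"
  using idem_zero[of "Cmp T (Zerom T B C) f" A C] distr[of "Zerom T B C" B C "Zerom T B C" f A]
    add_zero[of "Zerom T B C" B C] cmp[of f A B "Zerom T B C" C] by simp

lemma cmp_neg_r: assumes "f \<in> Hom T A B" "g \<in> Hom T B C"
  shows "Cmp T g (Negm T f) = Negm T (Cmp T g f)"
proof -
  have nf: "Negm T f \<in> Hom T A B" using neg assms by blast
  have "Addm T (Cmp T g f) (Cmp T g (Negm T f)) = Cmp T g (Addm T f (Negm T f))"
    using distl[OF assms(1) nf assms(2)] by simp
  also have "\<dots> = Zerom T A C" using add_neg[OF assms(1)] cmp_zero_r[OF assms(2)] by simp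
  finally show ?thesis using inv_unique cmp assms nf by blast
qed
lemma cmp_neg_l: assumes "f \<in> Hom T A B" "g \<in> Hom T B C"
  shows "Cmp T (Negm T g) f = Negm T (Cmp T g f)"
proof -
  have ng: "Negm T g \<in> Hom T B C" using neg assms by blast
  have "Addm T (Cmp T g f) (Cmp T (Negm T g) f) = Cmp T (Addm T g (Negm T g)) f"
    using distr[OF assms(2) ng assms(1)] by simp
  also have "\<dots> = Zerom T A C" using add_neg[OF assms(2)] cmp_zero_l[OF assms(1)] by simp
  finally show ?thesis using inv_unique cmp assms ng by blast
qed

lemma neg_eq_zero: "x \<in> Hom T A B \<Longrightarrow> Negm T x = Zerom T A B \<Longrightarrow> x = Zerom T A B"
  by (metis neg_neg neg_zero)


lemmas TRs = tri[unfolded triangulated_def, THEN conjunct2, THEN conjunct2]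
lemma tri_is: "(u,v,w) \<in> Tri T \<Longrightarrow> is_tri T u v w"
  using TRs[THEN conjunct1] by blast
lemma iso_closed: "(u,v,w) \<in> Tri T \<Longrightarrow> tri_morph T u v w u' v' w' a b c \<Longrightarrow>
         iso T a \<Longrightarrow> iso T b \<Longrightarrow> iso T c \<Longrightarrow> (u',v',w') \<in> Tri T"
  using TRs[THEN conjunct2, THEN conjunct1] by blast
lemma TR1z: "\<exists>Z. is_zero_obj T Z \<and> (Idm T A, Zerom T A Z, Zerom T Z (Sh T A)) \<in> Tri T"
  using TRs[THEN conjunct2, THEN conjunct2, THEN conjunct1] by blast
lemma TR1e: "u \<in> Arr T \<Longrightarrow> \<exists>v w. (u,v,w) \<in> Tri T"
  using TRs[THEN conjunct2, THEN conjunct2, THEN conjunct2, THEN conjunct1] by blast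
lemma TR2: "is_tri T u v w \<Longrightarrow> ((u,v,w) \<in> Tri T \<longleftrightarrow> (v, w, Negm T (ShM T u)) \<in> Tri T)"
  using TRs[THEN conjunct2, THEN conjunct2, THEN conjunct2, THEN conjunct2, THEN conjunct1] by blast
lemma rot: "(u,v,w) \<in> Tri T \<Longrightarrow> (v, w, Negm T (ShM T u)) \<in> Tri T"
  using TR2 tri_is by blast
lemma TR3: "(u,v,w) \<in> Tri T \<Longrightarrow> (u',v',w') \<in> Tri T \<Longrightarrow>
         a \<in> Hom T (Dom T u) (Dom T u') \<Longrightarrow> b \<in> Hom T (Cod T u) (Cod T u') \<Longrightarrow>
         Cmp T b u = Cmp T u' a \<Longrightarrow> (\<exists>c. tri_morph T u v w u' v' w' a b c)"
  using TRs[THEN conjunct2, THEN conjunct2, THEN conjunct2, THEN conjunct2, THEN conjunct2, THEN conjunct1] by blast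
lemma TR4: "(u1,j,k) \<in> Tri T \<Longrightarrow> (u2,l,i) \<in> Tri T \<Longrightarrow>
         Cod T u1 = Dom T u2 \<Longrightarrow> (Cmp T u2 u1, m, n) \<in> Tri T \<Longrightarrow>
         (\<exists>f g. (f, g, Cmp T (ShM T j) i) \<in> Tri T \<and>
            Cmp T f j = Cmp T m u2 \<and> Cmp T n f = k \<and>
            Cmp T g m = l \<and> Cmp T i g = Cmp T (ShM T u1) n)"
  using TRs[THEN conjunct2, THEN conjunct2, THEN conjunct2, THEN conjunct2, THEN conjunct2, THEN conjunct2] by blast

lemma arr_hom: "f \<in> Arr T \<Longrightarrow> f \<in> Hom T (Dom T f) (Cod T f)" by (simp add: Hom_def)
lemma hom_arr: "f \<in> Hom T A B \<Longrightarrow> f \<in> Arr T" by (simp add: Hom_def)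
lemma hom_dom: "f \<in> Hom T A B \<Longrightarrow> Dom T f = A" by (simp add: Hom_def)
lemma hom_cod: "f \<in> Hom T A B \<Longrightarrow> Cod T f = B" by (simp add: Hom_def)

lemma tri_homs: assumes "(u,v,w) \<in> Tri T"
  shows "u \<in> Hom T (Dom T u) (Cod T u)" "v \<in> Hom T (Cod T u) (Cod T v)"
    "w \<in> Hom T (Cod T v) (Sh T (Dom T u))"
  using tri_is[OF assms] unfolding is_tri_def Hom_def by auto

lemma zo_out: "is_zero_obj T Z \<Longrightarrow> f \<in> Hom T Z A \<Longrightarrow> f = Zerom T Z A"
  unfolding is_zero_obj_def using zero by blast
lemma zo_in: "is_zero_obj T Z \<Longrightarrow> f \<in> Hom T A Z \<Longrightarrow> f = Zerom T A Z"
  unfolding is_zero_obj_def using zero by blast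
lemma thru_zero: "is_zero_obj T Z \<Longrightarrow> f \<in> Hom T A Z \<Longrightarrow> g \<in> Hom T Z B \<Longrightarrow> Cmp T g f = Zerom T A B"
  using zo_out[of Z g B] cmp_zero_l[of f A Z B] by simp

lemma shm_hom: "f \<in> Hom T A B \<Longrightarrow> ShM T f \<in> Hom T (Sh T A) (Sh T B)"
  using sh unfolding shift_ok_def by blast
lemma shm_id: "ShM T (Idm T A) = Idm T (Sh T A)"
  using sh unfolding shift_ok_def by blast
lemma shm_cmp: "f \<in> Hom T A B \<Longrightarrow> g \<in> Hom T B C \<Longrightarrow> ShM T (Cmp T g f) = Cmp T (ShM T g) (ShM T f)"
  using sh unfolding shift_ok_def by blast
lemma shm_add: "f \<in> Hom T A B \<Longrightarrow> g \<in> Hom T A B \<Longrightarrow> ShM T (Addm T f g) = Addm T (ShM T f) (ShM T g)"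
  using sh unfolding shift_ok_def by blast
lemma shm_bij: "bij_betw (ShM T) (Hom T A B) (Hom T (Sh T A) (Sh T B))"
  using sh unfolding shift_ok_def by blast
lemma shm_inj: "f \<in> Hom T A B \<Longrightarrow> g \<in> Hom T A B \<Longrightarrow> ShM T f = ShM T g \<Longrightarrow> f = g"
  using shm_bij[of A B] unfolding bij_betw_def inj_on_def by blast
lemma shm_surj: "g \<in> Hom T (Sh T A) (Sh T B) \<Longrightarrow> \<exists>f\<in>Hom T A B. ShM T f = g"
proof -
  assume "g \<in> Hom T (Sh T A) (Sh T B)"
  hence "g \<in> ShM T ` Hom T A B" using shm_bij[of A B] unfolding bij_betw_def by simp
  thus ?thesis by blast
qed
lemma sh_ess: "\<exists>A f. f \<in> Hom T (Sh T A) B \<and> iso T f"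
  using sh unfolding shift_ok_def by blast
lemma shm_zero: "ShM T (Zerom T A B) = Zerom T (Sh T A) (Sh T B)"
  using idem_zero[OF shm_hom[OF zero[of A B]]] shm_add[OF zero zero] add_zero[OF zero] by simp
lemma shm_neg: "f \<in> Hom T A B \<Longrightarrow> ShM T (Negm T f) = Negm T (ShM T f)"
proof -
  assume f: "f \<in> Hom T A B"
  have "Addm T (ShM T f) (ShM T (Negm T f)) = Zerom T (Sh T A) (Sh T B)"
    using shm_add[OF f neg[OF f]] add_neg[OF f] shm_zero by simp
  thus ?thesis using inv_unique[OF shm_hom[OF f] shm_hom[OF neg[OF f]]] by simp
qed

lemma comp_zero: assumes "(u,v,w) \<in> Tri T" shows "Cmp T v u = Zerom T (Dom T u) (Cod T v)"
proof -
  let ?A = "Dom T u"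
  obtain Z where Z: "is_zero_obj T Z" "(Idm T ?A, Zerom T ?A Z, Zerom T Z (Sh T ?A)) \<in> Tri T"
    using TR1z by blast
  have d: "Dom T (Idm T ?A) = ?A" "Cod T (Idm T ?A) = ?A" using idm hom_dom hom_cod by blast+
  have uh: "u \<in> Hom T ?A (Cod T u)" using tri_homs(1)[OF assms] .
  have a1: "Idm T ?A \<in> Hom T (Dom T (Idm T ?A)) (Dom T u)" using d by simp
  have b1: "u \<in> Hom T (Cod T (Idm T ?A)) (Cod T u)" using d uh by simp
  obtain c where c: "tri_morph T (Idm T ?A) (Zerom T ?A Z) (Zerom T Z (Sh T ?A)) u v w (Idm T ?A) u c"
    using TR3[OF Z(2) assms a1 b1 refl] by blast
  hence c1: "c \<in> Hom T (Dom T (Zerom T Z (Sh T ?A))) (Dom T w)"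
    and c2: "Cmp T c (Zerom T ?A Z) = Cmp T v u"
    unfolding tri_morph_def by simp_all
  have "Dom T (Zerom T Z (Sh T ?A)) = Z" by (rule hom_dom[OF zero])
  moreover have "Dom T w = Cod T v" using hom_dom[OF tri_homs(3)[OF assms]] .
  ultimately have ch: "c \<in> Hom T Z (Cod T v)" using c1 by simp
  thus ?thesis using cmp_zero_r[OF ch] c2 by simp
qed


lemma cov_exact: assumes "(u,v,w) \<in> Tri T" "f \<in> Hom T Y (Cod T u)"
   "Cmp T v f = Zerom T Y (Cod T v)"
 shows "\<exists>a\<in>Hom T Y (Dom T u). f = Cmp T u a"
proof -
  obtain Z where Z: "is_zero_obj T Z" "(Idm T Y, Zerom T Y Z, Zerom T Z (Sh T Y)) \<in> Tri T"
    using TR1z by blast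
  have S: "(Zerom T Y Z, Zerom T Z (Sh T Y), Negm T (ShM T (Idm T Y))) \<in> Tri T"
    using rot[OF Z(2)] .
  have R: "(v, w, Negm T (ShM T u)) \<in> Tri T" using rot[OF assms(1)] .
  have uh: "u \<in> Hom T (Dom T u) (Cod T u)" and vh: "v \<in> Hom T (Cod T u) (Cod T v)"
    using tri_homs[OF assms(1)] by simp_all
  have dv: "Dom T v = Cod T u" using hom_dom[OF vh] .
  have a1: "f \<in> Hom T (Dom T (Zerom T Y Z)) (Dom T v)" using dv assms(2) hom_dom[OF zero] by simp
  have b1: "Zerom T Z (Cod T v) \<in> Hom T (Cod T (Zerom T Y Z)) (Cod T v)" using hom_cod[OF zero] by simp
  have sq: "Cmp T (Zerom T Z (Cod T v)) (Zerom T Y Z) = Cmp T v f"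
    using cmp_zero_r[OF zero] assms(3) by simp
  obtain c where c: "tri_morph T (Zerom T Y Z) (Zerom T Z (Sh T Y)) (Negm T (ShM T (Idm T Y)))
      v w (Negm T (ShM T u)) f (Zerom T Z (Cod T v)) c"
    using TR3[OF S R a1 b1 sq] by blast
  hence c1: "c \<in> Hom T (Dom T (Negm T (ShM T (Idm T Y)))) (Dom T (Negm T (ShM T u)))"
    and c2: "Cmp T (ShM T f) (Negm T (ShM T (Idm T Y))) = Cmp T (Negm T (ShM T u)) c"
    unfolding tri_morph_def by simp_all
  have sid: "ShM T (Idm T Y) \<in> Hom T (Sh T Y) (Sh T Y)" using shm_hom[OF idm] .
  have su: "ShM T u \<in> Hom T (Sh T (Dom T u)) (Sh T (Cod T u))" using shm_hom[OF uh] .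
  have sf: "ShM T f \<in> Hom T (Sh T Y) (Sh T (Cod T u))" using shm_hom[OF assms(2)] .
  have "Dom T (Negm T (ShM T (Idm T Y))) = Sh T Y" using hom_dom[OF neg[OF sid]] .
  moreover have "Dom T (Negm T (ShM T u)) = Sh T (Dom T u)" using hom_dom[OF neg[OF su]] .
  ultimately have ch: "c \<in> Hom T (Sh T Y) (Sh T (Dom T u))" using c1 by simp
  have "Cmp T (ShM T f) (Negm T (ShM T (Idm T Y))) = Negm T (ShM T f)"
    using cmp_neg_r[OF sid sf] shm_id idr[OF sf] by simp
  moreover have "Cmp T (Negm T (ShM T u)) c = Negm T (Cmp T (ShM T u) c)"
    using cmp_neg_l[OF ch su] .
  ultimately have "Negm T (ShM T f) = Negm T (Cmp T (ShM T u) c)" using c2 by simp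
  hence e: "ShM T f = Cmp T (ShM T u) c"
    using neg_neg[OF sf] neg_neg[OF cmp[OF ch su]] by metis
  obtain a where a: "a \<in> Hom T Y (Dom T u)" "ShM T a = c" using shm_surj[OF ch] by blast
  have "ShM T f = ShM T (Cmp T u a)" using e a shm_cmp[OF a(1) uh] by simp
  hence "f = Cmp T u a" using shm_inj[OF assms(2) cmp[OF a(1) uh]] by simp
  thus ?thesis using a(1) by blast
qed

lemma iso_zero: assumes "is_zero_obj T Z" "\<phi> \<in> Hom T Z' Z" "iso T \<phi>" shows "is_zero_obj T Z'"
proof -
  obtain \<psi> where p: "\<psi> \<in> Hom T Z Z'" "Cmp T \<psi> \<phi> = Idm T Z'" "Cmp T \<phi> \<psi> = Idm T Z"
    using assms(3) hom_dom[OF assms(2)] hom_cod[OF assms(2)] unfolding iso_def by auto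
  have o: "f = Zerom T Z' A" if f: "f \<in> Hom T Z' A" for f A
  proof -
    have "f = Cmp T f (Cmp T \<psi> \<phi>)" using idr[OF f] p by simp
    also have "\<dots> = Cmp T (Cmp T f \<psi>) \<phi>" using assoc[OF assms(2) p(1) f] .
    also have "\<dots> = Cmp T (Zerom T Z A) \<phi>" using zo_out[OF assms(1) cmp[OF p(1) f]] by simp
    also have "\<dots> = Zerom T Z' A" using cmp_zero_l[OF assms(2)] .
    finally show ?thesis .
  qed
  have i: "f = Zerom T A Z'" if f: "f \<in> Hom T A Z'" for f A
  proof -
    have "f = Cmp T (Cmp T \<psi> \<phi>) f" using idl[OF f] p by simp
    also have "\<dots> = Cmp T \<psi> (Cmp T \<phi> f)" using assoc[OF f assms(2) p(1)] by simp
    also have "\<dots> = Cmp T \<psi> (Zerom T A Z)" using zo_in[OF assms(1) cmp[OF f assms(2)]] by simp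
    also have "\<dots> = Zerom T A Z'" using cmp_zero_r[OF p(1)] .
    finally show ?thesis .
  qed
  show ?thesis unfolding is_zero_obj_def using o i zero by blast
qed

lemma sh_zero_back: assumes "is_zero_obj T (Sh T W)" shows "is_zero_obj T W"
proof -
  have o: "f = Zerom T W A" if f: "f \<in> Hom T W A" for f A
    using shm_inj[OF f zero] zo_out[OF assms shm_hom[OF f]] zo_out[OF assms shm_hom[OF zero[of W A]]] by simp
  have i: "f = Zerom T A W" if f: "f \<in> Hom T A W" for f A
    using shm_inj[OF f zero] zo_in[OF assms shm_hom[OF f]] zo_in[OF assms shm_hom[OF zero[of A W]]] by simp
  show ?thesis unfolding is_zero_obj_def using o i zero by blast
qed

lemma iso_id: "iso T (Idm T A)"
  unfolding iso_def using idm hom_dom hom_cod idl[OF idm] hom_arr by metis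

lemma zero_iso: assumes "is_zero_obj T Z" "is_zero_obj T Z'" shows "iso T (Zerom T Z Z')"
proof -
  have "Cmp T (Zerom T Z' Z) (Zerom T Z Z') = Idm T Z" using zo_out[OF assms(1)] cmp[OF zero zero] idm by metis
  moreover have "Cmp T (Zerom T Z Z') (Zerom T Z' Z) = Idm T Z'" using zo_out[OF assms(2)] cmp[OF zero zero] idm by metis
  ultimately show ?thesis unfolding iso_def using hom_dom[OF zero] hom_cod[OF zero] hom_arr[OF zero] zero
    by metis
qed

lemma tri_id2: "\<exists>W x y. is_zero_obj T W \<and> x \<in> Hom T W Y \<and> (x, Idm T Y, y) \<in> Tri T"
proof -
  obtain Z where Z: "is_zero_obj T Z" "(Idm T Y, Zerom T Y Z, Zerom T Z (Sh T Y)) \<in> Tri T"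
    using TR1z by blast
  obtain W \<phi> where W: "\<phi> \<in> Hom T (Sh T W) Z" "iso T \<phi>" using sh_ess by blast
  have zsw: "is_zero_obj T (Sh T W)" using iso_zero[OF Z(1) W] .
  have zw: "is_zero_obj T W" using sh_zero_back[OF zsw] .
  have dI: "Dom T (Idm T Y) = Y" "Cod T (Idm T Y) = Y" using hom_dom[OF idm] hom_cod[OF idm] by auto
  have t1: "(Idm T Y, Zerom T Y (Sh T W), Zerom T (Sh T W) (Sh T Y)) \<in> Tri T"
  proof (rule iso_closed[OF Z(2), of _ _ _ "Idm T Y" "Idm T Y" "Zerom T Z (Sh T W)"])
    show "iso T (Idm T Y)" by (rule iso_id)
    show "iso T (Idm T Y)" by (rule iso_id)
    show "iso T (Zerom T Z (Sh T W))" using zero_iso[OF Z(1) zsw] .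
    show "tri_morph T (Idm T Y) (Zerom T Y Z) (Zerom T Z (Sh T Y)) (Idm T Y) (Zerom T Y (Sh T W))
     (Zerom T (Sh T W) (Sh T Y)) (Idm T Y) (Idm T Y) (Zerom T Z (Sh T W))"
      unfolding tri_morph_def
    proof (intro conjI)
      show "is_tri T (Idm T Y) (Zerom T Y Z) (Zerom T Z (Sh T Y))" using tri_is[OF Z(2)] .
      show "is_tri T (Idm T Y) (Zerom T Y (Sh T W)) (Zerom T (Sh T W) (Sh T Y))"
        unfolding is_tri_def using dI hom_arr[OF idm] hom_arr[OF zero] hom_dom[OF zero] hom_cod[OF zero]
        by metis
      show "Idm T Y \<in> Hom T (Dom T (Idm T Y)) (Dom T (Idm T Y))" using dI by simp
      show "Idm T Y \<in> Hom T (Dom T (Zerom T Y Z)) (Dom T (Zerom T Y (Sh T W)))"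
        using hom_dom[OF zero] by simp
      show "Zerom T Z (Sh T W) \<in> Hom T (Dom T (Zerom T Z (Sh T Y))) (Dom T (Zerom T (Sh T W) (Sh T Y)))"
        using hom_dom[OF zero] by simp
      show "Cmp T (Idm T Y) (Idm T Y) = Cmp T (Idm T Y) (Idm T Y)" by simp
      show "Cmp T (Zerom T Z (Sh T W)) (Zerom T Y Z) = Cmp T (Zerom T Y (Sh T W)) (Idm T Y)"
        using cmp_zero_r[OF zero] idr[OF zero] by simp
      show "Cmp T (ShM T (Idm T Y)) (Zerom T Z (Sh T Y)) = Cmp T (Zerom T (Sh T W) (Sh T Y)) (Zerom T Z (Sh T W))"
        using cmp_zero_r[OF zero] cmp_zero_r[OF shm_hom[OF idm]] by simp
    qed
  qed
  have it: "is_tri T (Zerom T W Y) (Idm T Y) (Zerom T Y (Sh T W))"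
    unfolding is_tri_def using dI hom_arr[OF idm] hom_arr[OF zero] hom_dom[OF zero] hom_cod[OF zero]
    by metis
  have "Negm T (ShM T (Zerom T W Y)) = Zerom T (Sh T W) (Sh T Y)" using shm_zero neg_zero by simp
  hence "(Zerom T W Y, Idm T Y, Zerom T Y (Sh T W)) \<in> Tri T" using TR2[OF it] t1 by simp
  thus ?thesis using zw zero by blast
qed

lemma contra_exact: assumes "(u,v,w) \<in> Tri T" "g \<in> Hom T (Cod T u) Y"
   "Cmp T g u = Zerom T (Dom T u) Y"
 shows "\<exists>c\<in>Hom T (Cod T v) Y. Cmp T c v = g"
proof -
  obtain W x y where W: "is_zero_obj T W" "x \<in> Hom T W Y" "(x, Idm T Y, y) \<in> Tri T"
    using tri_id2 by blast
  have a1: "Zerom T (Dom T u) W \<in> Hom T (Dom T u) (Dom T x)" using hom_dom[OF W(2)] by simp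
  have b1: "g \<in> Hom T (Cod T u) (Cod T x)" using hom_cod[OF W(2)] assms(2) by simp
  have sq: "Cmp T g u = Cmp T x (Zerom T (Dom T u) W)"
    using assms(3) thru_zero[OF W(1) zero W(2)] by simp
  obtain c where c: "tri_morph T u v w x (Idm T Y) y (Zerom T (Dom T u) W) g c"
    using TR3[OF assms(1) W(3) a1 b1 sq] by blast
  hence c1: "c \<in> Hom T (Dom T w) (Dom T y)" and c2: "Cmp T c v = Cmp T (Idm T Y) g"
    unfolding tri_morph_def by simp_all
  have "Dom T w = Cod T v" using hom_dom[OF tri_homs(3)[OF assms(1)]] .
  moreover have "Dom T y = Y" using hom_dom[OF tri_homs(3)[OF W(3)]] hom_cod[OF idm] by simp
  ultimately have "c \<in> Hom T (Cod T v) Y" using c1 by simp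
  thus ?thesis using c2 idl[OF assms(2)] by auto
qed


lemma diff_eq: "x \<in> Hom T A B \<Longrightarrow> y \<in> Hom T A B \<Longrightarrow> Addm T x (Negm T y) = Zerom T A B \<Longrightarrow> y = x"
  using inv_unique[of x A B "Negm T y"] neg[of y A B] neg_neg[of y A B] neg_neg[of x A B] by metis

lemma rot2_zero: assumes "(u,v,w) \<in> Tri T" shows "Cmp T (ShM T u) w = Zerom T (Cod T v) (Sh T (Cod T u))"
proof -
  have R: "(w, Negm T (ShM T u), Negm T (ShM T v)) \<in> Tri T" using rot[OF rot[OF assms]] .
  have uh: "u \<in> Hom T (Dom T u) (Cod T u)" and wh: "w \<in> Hom T (Cod T v) (Sh T (Dom T u))"
    using tri_homs[OF assms] by simp_all
  have su: "ShM T u \<in> Hom T (Sh T (Dom T u)) (Sh T (Cod T u))" using shm_hom[OF uh] .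
  have "Cmp T (Negm T (ShM T u)) w = Zerom T (Dom T w) (Cod T (Negm T (ShM T u)))"
    using comp_zero[OF R] .
  also have "\<dots> = Zerom T (Cod T v) (Sh T (Cod T u))"
    using hom_dom[OF wh] hom_cod[OF neg[OF su]] by simp
  finally have "Negm T (Cmp T (ShM T u) w) = Zerom T (Cod T v) (Sh T (Cod T u))"
    using cmp_neg_l[OF wh su] by simp
  thus ?thesis using neg_eq_zero[OF cmp[OF wh su]] by simp
qed

lemma cone_inj: assumes bp: "biprod T Y B P p1 p2 i1 i2" and t: "(i2, j, k) \<in> Tri T"
  shows "Cmp T j i1 \<in> Hom T Y (Cod T j) \<and> iso T (Cmp T j i1)"
proof -
  let ?F = "Cod T j"
  have b: "p1 \<in> Hom T P Y" "p2 \<in> Hom T P B" "i1 \<in> Hom T Y P" "i2 \<in> Hom T B P"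
    "Cmp T p1 i1 = Idm T Y" "Cmp T p2 i2 = Idm T B"
    "Cmp T p1 i2 = Zerom T B Y" "Cmp T p2 i1 = Zerom T Y B"
    "Addm T (Cmp T i1 p1) (Cmp T i2 p2) = Idm T P"
    using bp unfolding biprod_def by simp_all
  have di: "Dom T i2 = B" "Cod T i2 = P" using hom_dom[OF b(4)] hom_cod[OF b(4)] by simp_all
  have jh: "j \<in> Hom T P ?F" and kh: "k \<in> Hom T ?F (Sh T B)"
    using tri_homs[OF t] di by simp_all
  have R: "(j, k, Negm T (ShM T i2)) \<in> Tri T" using rot[OF t] .
  have z1: "Cmp T (ShM T i2) k = Zerom T ?F (Sh T P)" using rot2_zero[OF t] di by simp
  have si2: "ShM T i2 \<in> Hom T (Sh T B) (Sh T P)" using shm_hom[OF b(4)] .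
  have sp2: "ShM T p2 \<in> Hom T (Sh T P) (Sh T B)" using shm_hom[OF b(2)] .
  have "k = Cmp T (ShM T (Cmp T p2 i2)) k" using b(6) shm_id idl[OF kh] by simp
  also have "\<dots> = Cmp T (Cmp T (ShM T p2) (ShM T i2)) k" using shm_cmp[OF b(4) b(2)] by simp
  also have "\<dots> = Cmp T (ShM T p2) (Cmp T (ShM T i2) k)" using assoc[OF kh si2 sp2] by simp
  also have "\<dots> = Zerom T ?F (Sh T B)" using z1 cmp_zero_r[OF sp2] by simp
  finally have k0: "k = Zerom T ?F (Sh T B)" .
  have "Cod T k = Sh T B" using hom_cod[OF kh] .
  hence "Cmp T k (Idm T ?F) = Zerom T ?F (Cod T k)" using k0 idr[OF kh] by simp
  moreover have "Idm T ?F \<in> Hom T ?F (Cod T j)" by simp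
  ultimately obtain t0 where t0: "t0 \<in> Hom T ?F (Dom T j)" "Idm T ?F = Cmp T j t0"
    using cov_exact[OF R] by blast
  have th: "t0 \<in> Hom T ?F P" using t0(1) hom_dom[OF jh] by simp
  have ji2: "Cmp T j i2 = Zerom T B ?F" using comp_zero[OF t] di by simp
  have ji1: "Cmp T j i1 \<in> Hom T Y ?F" using cmp[OF b(3) jh] .
  have "j = Cmp T j (Addm T (Cmp T i1 p1) (Cmp T i2 p2))" using b(9) idr[OF jh] by simp
  also have "\<dots> = Addm T (Cmp T j (Cmp T i1 p1)) (Cmp T j (Cmp T i2 p2))"
    using distl[OF cmp[OF b(1) b(3)] cmp[OF b(2) b(4)] jh] .
  also have "Cmp T j (Cmp T i2 p2) = Zerom T P ?F"
    using assoc[OF b(2) b(4) jh] ji2 cmp_zero_l[OF b(2)] by simp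
  also have "Cmp T j (Cmp T i1 p1) = Cmp T (Cmp T j i1) p1" using assoc[OF b(1) b(3) jh] .
  finally have jd: "j = Cmp T (Cmp T j i1) p1" using add_zero[OF cmp[OF b(1) ji1]] by simp
  have pt: "Cmp T p1 t0 \<in> Hom T ?F Y" using cmp[OF th b(1)] .
  have inv1: "Cmp T (Cmp T j i1) (Cmp T p1 t0) = Idm T ?F"
    using assoc[OF th b(1) ji1] jd t0(2) by simp
  let ?e = "Cmp T t0 j"
  have eh: "?e \<in> Hom T P P" using cmp[OF jh th] .
  let ?d = "Addm T (Idm T P) (Negm T ?e)"
  have dh: "?d \<in> Hom T P P" using add[OF idm neg[OF eh]] .
  have je: "Cmp T j ?e = j" using assoc[OF jh th jh] t0(2) idl[OF jh] by simp
  have "Cmp T j ?d = Addm T (Cmp T j (Idm T P)) (Cmp T j (Negm T ?e))"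
    using distl[OF idm neg[OF eh] jh] .
  also have "\<dots> = Addm T j (Negm T j)" using idr[OF jh] cmp_neg_r[OF eh jh] je by simp
  also have "\<dots> = Zerom T P ?F" using add_neg[OF jh] .
  finally have "Cmp T j ?d = Zerom T P (Cod T j)" .
  moreover have "?d \<in> Hom T P (Cod T i2)" using dh di by simp
  ultimately obtain a where a: "a \<in> Hom T P (Dom T i2)" "?d = Cmp T i2 a"
    using cov_exact[OF t] by blast
  have ah: "a \<in> Hom T P B" using a(1) di by simp
  have "Cmp T p1 (Cmp T ?d i1) = Cmp T (Cmp T p1 i2) (Cmp T a i1)"
    using a(2) assoc[OF b(3) ah b(4)] assoc[OF cmp[OF b(3) ah] b(4) b(1)] by simp
  also have "\<dots> = Zerom T Y Y" using b(7) cmp_zero_l[OF cmp[OF b(3) ah]] by simp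
  finally have z: "Cmp T p1 (Cmp T ?d i1) = Zerom T Y Y" .
  have "Cmp T ?d i1 = Addm T (Cmp T (Idm T P) i1) (Cmp T (Negm T ?e) i1)"
    using distr[OF idm neg[OF eh] b(3)] .
  also have "\<dots> = Addm T i1 (Negm T (Cmp T ?e i1))" using idl[OF b(3)] cmp_neg_l[OF b(3) eh] by simp
  finally have "Cmp T p1 (Cmp T ?d i1) = Addm T (Cmp T p1 i1) (Cmp T p1 (Negm T (Cmp T ?e i1)))"
    using distl[OF b(3) neg[OF cmp[OF b(3) eh]] b(1)] by simp
  also have "\<dots> = Addm T (Idm T Y) (Negm T (Cmp T p1 (Cmp T ?e i1)))"
    using b(5) cmp_neg_r[OF cmp[OF b(3) eh] b(1)] by simp
  finally have "Addm T (Idm T Y) (Negm T (Cmp T p1 (Cmp T ?e i1))) = Zerom T Y Y" using z by simp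
  hence x1: "Cmp T p1 (Cmp T ?e i1) = Idm T Y"
    using diff_eq[OF idm cmp[OF cmp[OF b(3) eh] b(1)]] by simp
  have "Cmp T (Cmp T p1 t0) (Cmp T j i1) = Cmp T p1 (Cmp T ?e i1)"
    using assoc[OF b(3) jh th] assoc[OF ji1 th b(1)] by simp
  hence inv2: "Cmp T (Cmp T p1 t0) (Cmp T j i1) = Idm T Y" using x1 by simp
  have "iso T (Cmp T j i1)" unfolding iso_def
    using hom_arr[OF ji1] hom_dom[OF ji1] hom_cod[OF ji1] pt inv1 inv2 by auto
  thus ?thesis using ji1 by blast
qed


lemma grp1: "x \<in> Hom T A B \<Longrightarrow> y \<in> Hom T A B \<Longrightarrow> Addm T y (Negm T (Addm T x y)) = Negm T x"
proof -
  assume x: "x \<in> Hom T A B" and y: "y \<in> Hom T A B"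
  have xy: "Addm T x y \<in> Hom T A B" using add[OF x y] .
  have "Addm T x (Addm T y (Negm T (Addm T x y))) = Addm T (Addm T x y) (Negm T (Addm T x y))"
    using add_assoc[OF x y neg[OF xy]] by simp
  also have "\<dots> = Zerom T A B" using add_neg[OF xy] .
  finally show ?thesis using inv_unique[OF x add[OF y neg[OF xy]]] by simp
qed

lemma grp2: "x \<in> Hom T A B \<Longrightarrow> y \<in> Hom T A B \<Longrightarrow> Addm T y (Negm T x) = Negm T (Addm T x (Negm T y))"
proof -
  assume x: "x \<in> Hom T A B" and y: "y \<in> Hom T A B"
  have nx: "Negm T x \<in> Hom T A B" and ny: "Negm T y \<in> Hom T A B" using neg x y by auto
  have "Addm T (Addm T x (Negm T y)) (Addm T y (Negm T x)) = Addm T x (Addm T (Negm T y) (Addm T y (Negm T x)))"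
    using add_assoc[OF x ny add[OF y nx]] .
  also have "Addm T (Negm T y) (Addm T y (Negm T x)) = Addm T (Addm T (Negm T y) y) (Negm T x)"
    using add_assoc[OF ny y nx] by simp
  also have "Addm T (Negm T y) y = Zerom T A B" using add_comm[OF ny y] add_neg[OF y] by simp
  also have "Addm T (Zerom T A B) (Negm T x) = Negm T x" using zero_add[OF nx] .
  also have "Addm T x (Negm T x) = Zerom T A B" using add_neg[OF x] .
  finally show ?thesis using inv_unique[OF add[OF x ny] add[OF y nx]] by simp
qed

lemma tsub_iso: "tri_subcat T N \<Longrightarrow> iso T f \<Longrightarrow> Dom T f \<in> N \<Longrightarrow> Cod T f \<in> N"
  unfolding tri_subcat_def subcat_def by blast
lemma tsub_sh: "tri_subcat T N \<Longrightarrow> A \<in> N \<longleftrightarrow> Sh T A \<in> N"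
  unfolding tri_subcat_def by blast
lemma tsub_cone: "tri_subcat T N \<Longrightarrow> (u,v,w) \<in> Tri T \<Longrightarrow> Dom T u \<in> N \<Longrightarrow> Cod T u \<in> N \<Longrightarrow> Cod T v \<in> N"
  unfolding tri_subcat_def by blast
lemma tsub_zero: assumes "tri_subcat T N" "is_zero_obj T Z" shows "Z \<in> N"
proof -
  obtain Z0 where Z0: "Z0 \<in> N" "is_zero_obj T Z0" using assms(1) unfolding tri_subcat_def subcat_def by blast
  have "iso T (Zerom T Z0 Z)" using zero_iso[OF Z0(2) assms(2)] .
  thus ?thesis using tsub_iso[OF assms(1)] Z0(1) hom_dom[OF zero] hom_cod[OF zero] by metis
qed

lemma cone_proj_N: assumes N: "tri_subcat T N" and bp: "biprod T Y B P p1 p2 i1 i2" and YN: "Y \<in> N"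
  and t: "(p2, l, i0) \<in> Tri T" shows "Cod T l \<in> N"
proof -
  have b: "p1 \<in> Hom T P Y" "p2 \<in> Hom T P B" "i1 \<in> Hom T Y P" "i2 \<in> Hom T B P"
    "Cmp T p2 i2 = Idm T B"
    using bp unfolding biprod_def by simp_all
  obtain j k where jk: "(i2, j, k) \<in> Tri T" using TR1e[OF hom_arr[OF b(4)]] by blast
  have ci: "Cmp T j i1 \<in> Hom T Y (Cod T j)" "iso T (Cmp T j i1)" using cone_inj[OF bp jk] by auto
  have FN: "Cod T j \<in> N" using tsub_iso[OF N ci(2)] hom_dom[OF ci(1)] hom_cod[OF ci(1)] YN by simp
  obtain Z where Z: "is_zero_obj T Z" "(Idm T B, Zerom T B Z, Zerom T Z (Sh T B)) \<in> Tri T"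
    using TR1z by blast
  have ZN: "Z \<in> N" using tsub_zero[OF N Z(1)] .
  have c: "Cod T i2 = Dom T p2" using hom_cod[OF b(4)] hom_dom[OF b(2)] by simp
  have t3: "(Cmp T p2 i2, Zerom T B Z, Zerom T Z (Sh T B)) \<in> Tri T" using Z(2) b(5) by simp
  obtain f g where fg: "(f, g, Cmp T (ShM T j) i0) \<in> Tri T" "Cmp T (Zerom T Z (Sh T B)) f = k"
      "Cmp T i0 g = Cmp T (ShM T i2) (Zerom T Z (Sh T B))"
    using TR4[OF jk t c t3] by blast
  have dp2: "Dom T p2 = P" using hom_dom[OF b(2)] .
  have jh: "j \<in> Hom T P (Cod T j)" using tri_homs(2)[OF jk] hom_cod[OF b(4)] by simp
  have i0h: "i0 \<in> Hom T (Cod T l) (Sh T P)" using tri_homs(3)[OF t] dp2 by simp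
  have c3: "Cmp T (ShM T j) i0 \<in> Hom T (Cod T l) (Sh T (Cod T j))" using cmp[OF i0h shm_hom[OF jh]] .
  have it: "is_tri T f g (Cmp T (ShM T j) i0)" using tri_is[OF fg(1)] .
  have cg: "Cod T g = Cod T l" using it hom_dom[OF c3] unfolding is_tri_def by simp
  have gh: "g \<in> Hom T (Dom T g) (Cod T l)" using arr_hom[of g] it cg unfolding is_tri_def by simp
  have "Cmp T i0 g \<in> Hom T (Dom T g) (Sh T P)" using cmp[OF gh i0h] .
  moreover have "Cmp T (ShM T i2) (Zerom T Z (Sh T B)) \<in> Hom T Z (Sh T P)" using cmp[OF zero shm_hom[OF b(4)]] .
  ultimately have dg: "Dom T g = Z" using fg(3) hom_dom by metis
  have fh: "f \<in> Hom T (Dom T f) Z" using arr_hom[of f] it dg unfolding is_tri_def by simp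
  have "Cmp T (Zerom T Z (Sh T B)) f \<in> Hom T (Dom T f) (Sh T B)" using cmp[OF fh zero] .
  moreover have "k \<in> Hom T (Cod T j) (Sh T B)" using tri_homs(3)[OF jk] hom_dom[OF b(4)] by simp
  ultimately have df: "Dom T f = Cod T j" using fg(2) hom_dom by metis
  show ?thesis using tsub_cone[OF N fg(1)] df FN hom_cod[OF fh] ZN cg by simp
qed


lemma verdier_monic: assumes N: "tri_subcat T N" and XCN: "X = C \<inter> N"
  and fm: "frob_monic T X C"
  and tr: "(s,v,w) \<in> Tri T" and sA: "Dom T s \<in> C" and sB: "Cod T s \<in> C" and vN: "Cod T v \<in> N"
  shows "q_iso T X s"
proof -
  let ?A = "Dom T s" and ?B = "Cod T s" and ?N = "Cod T v"
  have smc: "special_monic_closed T X C" using fm unfolding frob_monic_def by blast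
  obtain i p q where ipq: "(i,p,q) \<in> Tri T" "Dom T i = ?A" "preenv T X i" "Cod T p \<in> C" "precov T X p"
    using fm sA unfolding frob_monic_def by blast
  have XAX: "Cod T i \<in> X" using ipq(3) unfolding preenv_def by blast
  have XAN: "Cod T i \<in> N" using XAX XCN by blast
  have sarr: "s \<in> Arr T" using tri_is[OF tr] unfolding is_tri_def by blast
  have "\<forall>i p q f. (i,p,q) \<in> Tri T \<and> Dom T i \<in> C \<and> Cod T p \<in> C \<and> preenv T X i \<and>
         f \<in> Arr T \<and> Dom T f = Dom T i \<and> Cod T f \<in> C \<longrightarrow>
         (\<exists>P p1 p2 i1 i2 h v w. biprod T (Cod T i) (Cod T f) P p1 p2 i1 i2 \<and>
            h \<in> Hom T (Dom T i) P \<and> Cmp T p1 h = i \<and> Cmp T p2 h = f \<and>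
            (h,v,w) \<in> Tri T \<and> Cod T v \<in> C)" using smc unfolding special_monic_closed_def by blast
  then obtain P p1 p2 i1 i2 h v' w' where H: "biprod T (Cod T i) ?B P p1 p2 i1 i2"
     "h \<in> Hom T ?A P" "Cmp T p1 h = i" "Cmp T p2 h = s" "(h,v',w') \<in> Tri T" "Cod T v' \<in> C"
    using ipq sA sB sarr by metis
  let ?XA = "Cod T i" and ?M = "Cod T v'"
  have b: "p1 \<in> Hom T P ?XA" "p2 \<in> Hom T P ?B" "i1 \<in> Hom T ?XA P" "i2 \<in> Hom T ?B P"
    "Cmp T p1 i1 = Idm T ?XA" "Cmp T p2 i2 = Idm T ?B"
    "Cmp T p1 i2 = Zerom T ?B ?XA" "Cmp T p2 i1 = Zerom T ?XA ?B"
    "Addm T (Cmp T i1 p1) (Cmp T i2 p2) = Idm T P"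
    using H(1) unfolding biprod_def by simp_all
  have dh: "Dom T h = ?A" "Cod T h = P" using hom_dom[OF H(2)] hom_cod[OF H(2)] by simp_all
  have vh': "v' \<in> Hom T P ?M" using tri_homs(2)[OF H(5)] dh by simp
  have wh': "w' \<in> Hom T ?M (Sh T ?A)" using tri_homs(3)[OF H(5)] dh by simp
  have sh: "s \<in> Hom T ?A ?B" using arr_hom[OF sarr] .
  have vh: "v \<in> Hom T ?B ?N" using tri_homs(2)[OF tr] .
  have wh: "w \<in> Hom T ?N (Sh T ?A)" using tri_homs(3)[OF tr] .
  have ih: "i \<in> Hom T ?A ?XA" using arr_hom[of i] tri_is[OF ipq(1)] ipq(2) unfolding is_tri_def by simp
  obtain l i0 where li: "(p2, l, i0) \<in> Tri T" using TR1e[OF hom_arr[OF b(2)]] by blast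
  have EN: "Cod T l \<in> N" using cone_proj_N[OF N H(1) XAN li] .
  have c: "Cod T h = Dom T p2" using dh hom_dom[OF b(2)] by simp
  have t3: "(Cmp T p2 h, v, w) \<in> Tri T" using tr H(4) by simp
  obtain f g where fg: "(f, g, Cmp T (ShM T v') i0) \<in> Tri T" "Cmp T w f = w'"
      "Cmp T i0 g = Cmp T (ShM T h) w"
    using TR4[OF H(5) li c t3] by blast
  have i0h: "i0 \<in> Hom T (Cod T l) (Sh T P)" using tri_homs(3)[OF li] hom_dom[OF b(2)] by simp
  have c3: "Cmp T (ShM T v') i0 \<in> Hom T (Cod T l) (Sh T ?M)" using cmp[OF i0h shm_hom[OF vh']] .
  have it: "is_tri T f g (Cmp T (ShM T v') i0)" using tri_is[OF fg(1)] .
  have cg: "Cod T g = Cod T l" using it hom_dom[OF c3] unfolding is_tri_def by simp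
  have gh: "g \<in> Hom T (Dom T g) (Cod T l)" using arr_hom[of g] it cg unfolding is_tri_def by simp
  have "Cmp T i0 g \<in> Hom T (Dom T g) (Sh T P)" using cmp[OF gh i0h] .
  moreover have "Cmp T (ShM T h) w \<in> Hom T ?N (Sh T P)" using cmp[OF wh shm_hom[OF H(2)]] .
  ultimately have dg: "Dom T g = ?N" using fg(3) hom_dom by metis
  have fh: "f \<in> Hom T (Dom T f) ?N" using arr_hom[of f] it dg unfolding is_tri_def by simp
  have "Cmp T w f \<in> Hom T (Dom T f) (Sh T ?A)" using cmp[OF fh wh] .
  hence df: "Dom T f = ?M" using fg(2) hom_dom[OF wh'] hom_dom by metis
  have "Cod T (Cmp T (ShM T v') i0) \<in> N" using tsub_cone[OF N rot[OF fg(1)]] dg vN cg EN by simp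
  hence "Sh T (Dom T f) \<in> N" using it unfolding is_tri_def by simp
  hence MN: "?M \<in> N" using tsub_sh[OF N] df by simp
  have MX: "?M \<in> X" using MN H(6) XCN by blast
  have z1: "Cmp T (ShM T h) w' = Zerom T ?M (Sh T P)" using rot2_zero[OF H(5)] dh by simp
  have sp1: "ShM T p1 \<in> Hom T (Sh T P) (Sh T ?XA)" using shm_hom[OF b(1)] .
  have shh: "ShM T h \<in> Hom T (Sh T ?A) (Sh T P)" using shm_hom[OF H(2)] .
  have z2: "Cmp T (ShM T i) w' = Zerom T ?M (Sh T ?XA)"
    using H(3) shm_cmp[OF H(2) b(1)] assoc[OF wh' shh sp1] z1 cmp_zero_r[OF sp1] by metis
  have R3: "(q, Negm T (ShM T i), Negm T (ShM T p)) \<in> Tri T" using rot[OF rot[OF ipq(1)]] .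
  have ph: "p \<in> Hom T ?XA (Cod T p)" using tri_homs(2)[OF ipq(1)] .
  have qh: "q \<in> Hom T (Cod T p) (Sh T ?A)" using tri_homs(3)[OF ipq(1)] ipq(2) by simp
  have si: "ShM T i \<in> Hom T (Sh T ?A) (Sh T ?XA)" using shm_hom[OF ih] .
  have "Cmp T (Negm T (ShM T i)) w' = Zerom T ?M (Cod T (Negm T (ShM T i)))"
    using cmp_neg_l[OF wh' si] z2 neg_zero hom_cod[OF neg[OF si]] by simp
  moreover have "w' \<in> Hom T ?M (Cod T q)" using wh' hom_cod[OF qh] by simp
  ultimately obtain a where a: "a \<in> Hom T ?M (Dom T q)" "w' = Cmp T q a"
    using cov_exact[OF R3] by blast
  have ah: "a \<in> Hom T ?M (Cod T p)" using a(1) hom_dom[OF qh] by simp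
  have "\<forall>Y0\<in>X. \<forall>g\<in>Hom T Y0 (Cod T p). \<exists>h\<in>Hom T Y0 (Dom T p). Cmp T p h = g"
    using ipq(5) unfolding precov_def epic_wrt_def by blast
  then obtain bb where bb: "bb \<in> Hom T ?M (Dom T p)" "Cmp T p bb = a" using MX ah by blast
  have bbh: "bb \<in> Hom T ?M ?XA" using bb(1) hom_dom[OF ph] by simp
  have qp: "Cmp T q p = Zerom T ?XA (Sh T ?A)"
    using comp_zero[OF rot[OF ipq(1)]] hom_dom[OF ph] hom_cod[OF qh] by simp
  have w0: "w' = Zerom T ?M (Sh T ?A)"
    using a(2) bb(2) assoc[OF bbh ph qh] qp cmp_zero_l[OF bbh] by simp
  have R2: "(w', Negm T (ShM T h), Negm T (ShM T v')) \<in> Tri T" using rot[OF rot[OF H(5)]] .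
  have "Cmp T (Idm T (Sh T ?A)) w' = Zerom T (Dom T w') (Sh T ?A)"
    using idl[OF wh'] w0 hom_dom[OF wh'] by simp
  moreover have "Idm T (Sh T ?A) \<in> Hom T (Cod T w') (Sh T ?A)" using hom_cod[OF wh'] by simp
  ultimately obtain cc where cc: "cc \<in> Hom T (Cod T (Negm T (ShM T h))) (Sh T ?A)"
      "Cmp T cc (Negm T (ShM T h)) = Idm T (Sh T ?A)"
    using contra_exact[OF R2] by blast
  have cch: "cc \<in> Hom T (Sh T P) (Sh T ?A)" using cc(1) hom_cod[OF neg[OF shh]] by simp
  obtain r0 where r0: "r0 \<in> Hom T P ?A" "ShM T r0 = cc" using shm_surj[OF cch] by blast
  have r0h: "Cmp T r0 h \<in> Hom T ?A ?A" using cmp[OF H(2) r0(1)] .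
  have "ShM T (Negm T (Cmp T r0 h)) = Idm T (Sh T ?A)"
    using cc(2) r0(2) cmp_neg_r[OF shh cch] shm_cmp[OF H(2) r0(1)] shm_neg[OF r0h] by simp
  hence "Negm T (Cmp T r0 h) = Idm T ?A" using shm_inj[OF neg[OF r0h] idm] shm_id by simp
  define r where "r = Negm T r0"
  have rh: "r \<in> Hom T P ?A" using neg[OF r0(1)] r_def by simp
  have rh1: "Cmp T r h = Idm T ?A"
    using cmp_neg_l[OF H(2) r0(1)] r_def \<open>Negm T (Cmp T r0 h) = Idm T ?A\<close> by simp
  let ?hr = "Cmp T h r"
  have hrh: "?hr \<in> Hom T P P" using cmp[OF rh H(2)] .
  let ?d = "Addm T (Idm T P) (Negm T ?hr)"
  have ddh: "?d \<in> Hom T P P" using add[OF idm neg[OF hrh]] .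
  have "Cmp T ?d h = Addm T (Cmp T (Idm T P) h) (Cmp T (Negm T ?hr) h)"
    using distr[OF idm neg[OF hrh] H(2)] .
  also have "\<dots> = Addm T h (Negm T h)"
    using idl[OF H(2)] cmp_neg_l[OF H(2) hrh] assoc[OF H(2) rh H(2)] rh1 idr[OF H(2)] by simp
  also have "\<dots> = Zerom T (Dom T h) P" using add_neg[OF H(2)] dh by simp
  finally have "Cmp T ?d h = Zerom T (Dom T h) P" .
  moreover have "?d \<in> Hom T (Cod T h) P" using ddh dh by simp
  ultimately obtain e where e: "e \<in> Hom T (Cod T v') P" "Cmp T e v' = ?d"
    using contra_exact[OF H(5)] by blast
  define g0 where "g0 = Cmp T r i2"
  have g0h: "g0 \<in> Hom T ?B ?A" using cmp[OF b(4) rh] g0_def by simp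
  have ri1: "Cmp T r i1 \<in> Hom T ?XA ?A" using cmp[OF b(3) rh] .
  have "Idm T ?A = Cmp T (Cmp T r (Idm T P)) h" using rh1 idr[OF rh] by simp
  also have "Cmp T r (Idm T P) = Addm T (Cmp T r (Cmp T i1 p1)) (Cmp T r (Cmp T i2 p2))"
    using b(9) distl[OF cmp[OF b(1) b(3)] cmp[OF b(2) b(4)] rh] by simp
  also have "Cmp T (Addm T (Cmp T r (Cmp T i1 p1)) (Cmp T r (Cmp T i2 p2))) h
      = Addm T (Cmp T (Cmp T r (Cmp T i1 p1)) h) (Cmp T (Cmp T r (Cmp T i2 p2)) h)"
    using distr[OF cmp[OF cmp[OF b(1) b(3)] rh] cmp[OF cmp[OF b(2) b(4)] rh] H(2)] .
  also have "Cmp T (Cmp T r (Cmp T i1 p1)) h = Cmp T (Cmp T r i1) i"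
    using assoc[OF b(1) b(3) rh] assoc[OF H(2) b(1) ri1] H(3) by simp
  also have "Cmp T (Cmp T r (Cmp T i2 p2)) h = Cmp T g0 s"
    using assoc[OF b(2) b(4) rh] assoc[OF H(2) b(2) g0h[unfolded g0_def]] H(4) g0_def by simp
  finally have idA: "Idm T ?A = Addm T (Cmp T (Cmp T r i1) i) (Cmp T g0 s)" .
  have f1: "diffm T (Cmp T g0 s) (Idm T ?A) = Cmp T (Negm T (Cmp T r i1)) i"
    unfolding diffm_def idA using grp1[OF cmp[OF ih ri1] cmp[OF sh g0h]] cmp_neg_l[OF ih ri1] by simp
  have fac1: "factors T X (diffm T (Cmp T g0 s) (Idm T ?A))"
  proof -
    have "diffm T (Cmp T g0 s) (Idm T ?A) \<in> Hom T ?A ?A"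
      unfolding diffm_def using add[OF cmp[OF sh g0h] neg[OF idm]] .
    thus ?thesis unfolding factors_def using f1 XAX ih neg[OF ri1] hom_dom hom_cod by metis
  qed
  have ei2: "Cmp T v' i2 \<in> Hom T ?B ?M" using cmp[OF b(4) vh'] .
  have eh: "e \<in> Hom T ?M P" using e(1) .
  have p2e: "Cmp T p2 e \<in> Hom T ?M ?B" using cmp[OF eh b(2)] .
  have sg0: "Cmp T s g0 \<in> Hom T ?B ?B" using cmp[OF g0h sh] .
  have "Cmp T (Cmp T p2 e) (Cmp T v' i2) = Cmp T p2 (Cmp T ?d i2)"
    using assoc[OF b(4) vh' eh] assoc[OF ei2 eh b(2)] e(2) by simp
  also have "Cmp T ?d i2 = Addm T i2 (Negm T (Cmp T ?hr i2))"
    using distr[OF idm neg[OF hrh] b(4)] idl[OF b(4)] cmp_neg_l[OF b(4) hrh] by simp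
  also have "Cmp T p2 (Addm T i2 (Negm T (Cmp T ?hr i2))) = Addm T (Idm T ?B) (Negm T (Cmp T s g0))"
  proof -
    have hri: "Cmp T ?hr i2 \<in> Hom T ?B P" using cmp[OF b(4) hrh] .
    have "Cmp T p2 (Cmp T ?hr i2) = Cmp T s g0"
      using assoc[OF b(4) rh H(2)] assoc[OF g0h[unfolded g0_def] H(2) b(2)] H(4) g0_def by simp
    thus ?thesis using distl[OF b(4) neg[OF hri] b(2)] b(6) cmp_neg_r[OF hri b(2)] by simp
  qed
  finally have ee: "Cmp T (Cmp T p2 e) (Cmp T v' i2) = Addm T (Idm T ?B) (Negm T (Cmp T s g0))" .
  have f2: "diffm T (Cmp T s g0) (Idm T ?B) = Cmp T (Negm T (Cmp T p2 e)) (Cmp T v' i2)"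
    unfolding diffm_def using grp2[OF idm sg0] ee cmp_neg_l[OF ei2 p2e] by simp
  have fac2: "factors T X (diffm T (Cmp T s g0) (Idm T ?B))"
  proof -
    have "diffm T (Cmp T s g0) (Idm T ?B) \<in> Hom T ?B ?B"
      unfolding diffm_def using add[OF sg0 neg[OF idm]] .
    thus ?thesis unfolding factors_def using f2 MX ei2 neg[OF p2e] hom_dom hom_cod by metis
  qed
  show ?thesis unfolding q_iso_def using sarr g0h fac1 fac2 by blast
qed


lemma verdier_epic: assumes N: "tri_subcat T N" and XCN: "X = C \<inter> N"
  and fe: "frob_epic T X C"
  and tr: "(s,v,w) \<in> Tri T" and sA: "Dom T s \<in> C" and sB: "Cod T s \<in> C" and vN: "Cod T v \<in> N"
  shows "q_iso T X s"
proof -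
  let ?A = "Dom T s" and ?B = "Cod T s" and ?N = "Cod T v"
  have sec: "special_epic_closed T X C" using fe unfolding frob_epic_def by blast
  obtain \<iota> \<pi> q where ipq: "(\<iota>,\<pi>,q) \<in> Tri T" "Cod T \<pi> = ?B" "precov T X \<pi>" "Dom T \<iota> \<in> C" "preenv T X \<iota>"
    using fe sB unfolding frob_epic_def by blast
  have XBX: "Dom T \<pi> \<in> X" using ipq(3) unfolding precov_def by blast
  have XBN: "Dom T \<pi> \<in> N" using XBX XCN by blast
  have sarr: "s \<in> Arr T" using tri_is[OF tr] unfolding is_tri_def by blast
  have "\<forall>\<iota> \<pi> q f. (\<iota>,\<pi>,q) \<in> Tri T \<and> Dom T \<iota> \<in> C \<and> Cod T \<pi> \<in> C \<and> precov T X \<pi> \<and>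
         f \<in> Arr T \<and> Cod T f = Cod T \<pi> \<and> Dom T f \<in> C \<longrightarrow>
         (\<exists>P p1 p2 i1 i2 h a w. biprod T (Dom T \<pi>) (Dom T f) P p1 p2 i1 i2 \<and>
            h \<in> Hom T P (Cod T \<pi>) \<and> Cmp T h i1 = \<pi> \<and> Cmp T h i2 = f \<and>
            (a,h,w) \<in> Tri T \<and> Dom T a \<in> C)" using sec unfolding special_epic_closed_def by blast
  then obtain P p1 p2 i1 i2 h a w2 where H: "biprod T (Dom T \<pi>) ?A P p1 p2 i1 i2"
     "h \<in> Hom T P ?B" "Cmp T h i1 = \<pi>" "Cmp T h i2 = s" "(a,h,w2) \<in> Tri T" "Dom T a \<in> C"
    using ipq sA sB sarr by metis
  let ?XB = "Dom T \<pi>" and ?M = "Dom T a"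
  have b: "p1 \<in> Hom T P ?XB" "p2 \<in> Hom T P ?A" "i1 \<in> Hom T ?XB P" "i2 \<in> Hom T ?A P"
    "Cmp T p1 i1 = Idm T ?XB" "Cmp T p2 i2 = Idm T ?A"
    "Cmp T p1 i2 = Zerom T ?A ?XB" "Cmp T p2 i1 = Zerom T ?XB ?A"
    "Addm T (Cmp T i1 p1) (Cmp T i2 p2) = Idm T P"
    using H(1) unfolding biprod_def by simp_all
  have dh: "Dom T h = P" "Cod T h = ?B" using hom_dom[OF H(2)] hom_cod[OF H(2)] by simp_all
  have ah: "a \<in> Hom T ?M P" using tri_homs(1)[OF H(5)] tri_homs(2)[OF H(5)] dh hom_dom hom_cod
    by (metis)
  have ca: "Cod T a = P" using hom_cod[OF ah] .
  have w2h: "w2 \<in> Hom T ?B (Sh T ?M)" using tri_homs(3)[OF H(5)] dh hom_cod[OF tri_homs(2)[OF H(5)]] by simp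
  have sh: "s \<in> Hom T ?A ?B" using arr_hom[OF sarr] .
  have vh: "v \<in> Hom T ?B ?N" using tri_homs(2)[OF tr] .
  have wh: "w \<in> Hom T ?N (Sh T ?A)" using tri_homs(3)[OF tr] .
  have pih: "\<pi> \<in> Hom T ?XB ?B" using arr_hom[of \<pi>] tri_is[OF ipq(1)] ipq(2) unfolding is_tri_def by simp
  obtain j k where jk: "(i2, j, k) \<in> Tri T" using TR1e[OF hom_arr[OF b(4)]] by blast
  have ci: "Cmp T j i1 \<in> Hom T ?XB (Cod T j)" "iso T (Cmp T j i1)" using cone_inj[OF H(1) jk] by auto
  have FN: "Cod T j \<in> N" using tsub_iso[OF N ci(2)] hom_dom[OF ci(1)] hom_cod[OF ci(1)] XBN by simp
  have Rh: "(h, w2, Negm T (ShM T a)) \<in> Tri T" using rot[OF H(5)] .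
  have c: "Cod T i2 = Dom T h" using hom_cod[OF b(4)] dh by simp
  have t3: "(Cmp T h i2, v, w) \<in> Tri T" using tr H(4) by simp
  obtain f g where fg: "(f, g, Cmp T (ShM T j) (Negm T (ShM T a))) \<in> Tri T" "Cmp T w f = k"
      "Cmp T (Negm T (ShM T a)) g = Cmp T (ShM T i2) w"
    using TR4[OF jk Rh c t3] by blast
  have jh: "j \<in> Hom T P (Cod T j)" using tri_homs(2)[OF jk] hom_cod[OF b(4)] by simp
  have sah: "Negm T (ShM T a) \<in> Hom T (Sh T ?M) (Sh T P)" using neg[OF shm_hom[OF ah]] .
  have c3: "Cmp T (ShM T j) (Negm T (ShM T a)) \<in> Hom T (Sh T ?M) (Sh T (Cod T j))"
    using cmp[OF sah shm_hom[OF jh]] .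
  have it: "is_tri T f g (Cmp T (ShM T j) (Negm T (ShM T a)))" using tri_is[OF fg(1)] .
  have cg: "Cod T g = Sh T ?M" using it hom_dom[OF c3] unfolding is_tri_def by simp
  have gh: "g \<in> Hom T (Dom T g) (Sh T ?M)" using arr_hom[of g] it cg unfolding is_tri_def by simp
  have "Cmp T (Negm T (ShM T a)) g \<in> Hom T (Dom T g) (Sh T P)" using cmp[OF gh sah] .
  moreover have "Cmp T (ShM T i2) w \<in> Hom T ?N (Sh T P)" using cmp[OF wh shm_hom[OF b(4)]] .
  ultimately have dg: "Dom T g = ?N" using fg(3) hom_dom by metis
  have fh: "f \<in> Hom T (Dom T f) ?N" using arr_hom[of f] it dg unfolding is_tri_def by simp
  have "Cmp T w f \<in> Hom T (Dom T f) (Sh T ?A)" using cmp[OF fh wh] .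
  moreover have "k \<in> Hom T (Cod T j) (Sh T ?A)" using tri_homs(3)[OF jk] hom_dom[OF b(4)] by simp
  ultimately have df: "Dom T f = Cod T j" using fg(2) hom_dom by metis
  have "Cod T g \<in> N" using tsub_cone[OF N fg(1)] df FN hom_cod[OF fh] vN by simp
  hence MN: "?M \<in> N" using tsub_sh[OF N] cg by simp
  have MX: "?M \<in> X" using MN H(6) XCN by blast
  have z1: "Cmp T w2 h = Zerom T P (Sh T ?M)" using comp_zero[OF Rh] dh hom_cod[OF w2h] by simp
  have z2: "Cmp T w2 \<pi> = Zerom T ?XB (Sh T ?M)"
    using H(3) assoc[OF b(3) H(2) w2h] z1 cmp_zero_l[OF b(3)] by simp
  have R1: "(\<pi>, q, Negm T (ShM T \<iota>)) \<in> Tri T" using rot[OF ipq(1)] .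
  have ioh: "\<iota> \<in> Hom T (Dom T \<iota>) ?XB" using tri_homs(1)[OF ipq(1)] hom_dom[OF tri_homs(2)[OF ipq(1)]] by simp
  have qh: "q \<in> Hom T ?B (Sh T (Dom T \<iota>))" using tri_homs(3)[OF ipq(1)] ipq(2) by simp
  have "w2 \<in> Hom T (Cod T \<pi>) (Sh T ?M)" using w2h ipq(2) by simp
  moreover have "Cmp T w2 \<pi> = Zerom T (Dom T \<pi>) (Sh T ?M)" using z2 .
  ultimately obtain cc where cc: "cc \<in> Hom T (Cod T q) (Sh T ?M)" "Cmp T cc q = w2"
    using contra_exact[OF R1] by blast
  have cch: "cc \<in> Hom T (Sh T (Dom T \<iota>)) (Sh T ?M)" using cc(1) hom_cod[OF qh] by simp
  obtain c' where c': "c' \<in> Hom T (Dom T \<iota>) ?M" "ShM T c' = cc" using shm_surj[OF cch] by blast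
  have "\<forall>Y0\<in>X. \<forall>g\<in>Hom T (Dom T \<iota>) Y0. \<exists>h\<in>Hom T (Cod T \<iota>) Y0. Cmp T h \<iota> = g"
    using ipq(5) unfolding preenv_def monic_wrt_def by blast
  then obtain dd where dd: "dd \<in> Hom T (Cod T \<iota>) ?M" "Cmp T dd \<iota> = c'" using MX c'(1) by blast
  have ddh: "dd \<in> Hom T ?XB ?M" using dd(1) hom_cod[OF ioh] by simp
  have iq: "Cmp T (ShM T \<iota>) q = Zerom T ?B (Sh T ?XB)"
    using rot2_zero[OF ipq(1)] ipq(2) hom_cod[OF ioh] by simp
  have sio: "ShM T \<iota> \<in> Hom T (Sh T (Dom T \<iota>)) (Sh T ?XB)" using shm_hom[OF ioh] .
  have sdd: "ShM T dd \<in> Hom T (Sh T ?XB) (Sh T ?M)" using shm_hom[OF ddh] .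
  have w0: "w2 = Zerom T ?B (Sh T ?M)"
    using cc(2) c'(2) dd(2) shm_cmp[OF ioh ddh] assoc[OF qh sio sdd] iq cmp_zero_r[OF sdd] by simp
  have "Cmp T w2 (Idm T ?B) = Zerom T ?B (Cod T w2)" using idr[OF w2h] w0 hom_cod[OF w2h] by simp
  moreover have "Idm T ?B \<in> Hom T ?B (Cod T h)" using dh by simp
  ultimately obtain r where r: "r \<in> Hom T ?B (Dom T h)" "Idm T ?B = Cmp T h r"
    using cov_exact[OF Rh] by blast
  have rh: "r \<in> Hom T ?B P" using r(1) dh by simp
  let ?rh = "Cmp T r h"
  have rhh: "?rh \<in> Hom T P P" using cmp[OF H(2) rh] .
  let ?d = "Addm T (Idm T P) (Negm T ?rh)"
  have ddd: "?d \<in> Hom T P P" using add[OF idm neg[OF rhh]] .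
  have "Cmp T h ?d = Addm T (Cmp T h (Idm T P)) (Cmp T h (Negm T ?rh))"
    using distl[OF idm neg[OF rhh] H(2)] .
  also have "\<dots> = Addm T h (Negm T h)"
    using idr[OF H(2)] cmp_neg_r[OF rhh H(2)] assoc[OF H(2) rh H(2)] r(2) idl[OF H(2)] by simp
  also have "\<dots> = Zerom T P (Cod T h)" using add_neg[OF H(2)] dh by simp
  finally have "Cmp T h ?d = Zerom T P (Cod T h)" .
  moreover have "?d \<in> Hom T P (Cod T a)" using ddd ca by simp
  ultimately obtain e where e: "e \<in> Hom T P (Dom T a)" "?d = Cmp T a e"
    using cov_exact[OF H(5)] by blast
  define g0 where "g0 = Cmp T p2 r"
  have g0h: "g0 \<in> Hom T ?B ?A" using cmp[OF rh b(2)] g0_def by simp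
  have p1r: "Cmp T p1 r \<in> Hom T ?B ?XB" using cmp[OF rh b(1)] .
  have "Idm T ?B = Cmp T (Cmp T h (Idm T P)) r" using r(2) idr[OF H(2)] by simp
  also have "Cmp T h (Idm T P) = Addm T (Cmp T h (Cmp T i1 p1)) (Cmp T h (Cmp T i2 p2))"
    using b(9) distl[OF cmp[OF b(1) b(3)] cmp[OF b(2) b(4)] H(2)] by simp
  also have "Cmp T (Addm T (Cmp T h (Cmp T i1 p1)) (Cmp T h (Cmp T i2 p2))) r
      = Addm T (Cmp T (Cmp T h (Cmp T i1 p1)) r) (Cmp T (Cmp T h (Cmp T i2 p2)) r)"
    using distr[OF cmp[OF cmp[OF b(1) b(3)] H(2)] cmp[OF cmp[OF b(2) b(4)] H(2)] rh] .
  also have "Cmp T (Cmp T h (Cmp T i1 p1)) r = Cmp T \<pi> (Cmp T p1 r)"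
    using assoc[OF b(1) b(3) H(2)] assoc[OF rh b(1) cmp[OF b(3) H(2)]] H(3) by simp
  also have "Cmp T (Cmp T h (Cmp T i2 p2)) r = Cmp T s g0"
    using assoc[OF b(2) b(4) H(2)] assoc[OF rh b(2) cmp[OF b(4) H(2)]] H(4) g0_def by simp
  finally have idB: "Idm T ?B = Addm T (Cmp T \<pi> (Cmp T p1 r)) (Cmp T s g0)" .
  have f1: "diffm T (Cmp T s g0) (Idm T ?B) = Cmp T \<pi> (Negm T (Cmp T p1 r))"
    unfolding diffm_def idB using grp1[OF cmp[OF p1r pih] cmp[OF g0h sh]] cmp_neg_r[OF p1r pih] by simp
  have fac1: "factors T X (diffm T (Cmp T s g0) (Idm T ?B))"
  proof -
    have "diffm T (Cmp T s g0) (Idm T ?B) \<in> Hom T ?B ?B"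
      unfolding diffm_def using add[OF cmp[OF g0h sh] neg[OF idm]] .
    thus ?thesis unfolding factors_def using f1 XBX pih neg[OF p1r] hom_dom hom_cod by metis
  qed
  have eh: "e \<in> Hom T P ?M" using e(1) .
  have ei2: "Cmp T e i2 \<in> Hom T ?A ?M" using cmp[OF b(4) eh] .
  have p2a: "Cmp T p2 a \<in> Hom T ?M ?A" using cmp[OF ah b(2)] .
  have g0s: "Cmp T g0 s \<in> Hom T ?A ?A" using cmp[OF sh g0h] .
  have "Cmp T (Cmp T p2 a) (Cmp T e i2) = Cmp T p2 (Cmp T ?d i2)"
    using assoc[OF b(4) eh ah] assoc[OF ei2 ah b(2)] e(2) assoc[OF b(4) eh ah] by simp
  also have "Cmp T ?d i2 = Addm T i2 (Negm T (Cmp T ?rh i2))"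
    using distr[OF idm neg[OF rhh] b(4)] idl[OF b(4)] cmp_neg_l[OF b(4) rhh] by simp
  also have "Cmp T p2 (Addm T i2 (Negm T (Cmp T ?rh i2))) = Addm T (Idm T ?A) (Negm T (Cmp T g0 s))"
  proof -
    have rhi: "Cmp T ?rh i2 \<in> Hom T ?A P" using cmp[OF b(4) rhh] .
    have "Cmp T p2 (Cmp T ?rh i2) = Cmp T g0 s"
      using assoc[OF b(4) H(2) rh] assoc[OF cmp[OF b(4) H(2)] rh b(2)] H(4) g0_def by simp
    thus ?thesis using distl[OF b(4) neg[OF rhi] b(2)] b(6) cmp_neg_r[OF rhi b(2)] by simp
  qed
  finally have ee: "Cmp T (Cmp T p2 a) (Cmp T e i2) = Addm T (Idm T ?A) (Negm T (Cmp T g0 s))" .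
  have f2: "diffm T (Cmp T g0 s) (Idm T ?A) = Cmp T (Negm T (Cmp T p2 a)) (Cmp T e i2)"
    unfolding diffm_def using grp2[OF idm g0s] ee cmp_neg_l[OF ei2 p2a] by simp
  have fac2: "factors T X (diffm T (Cmp T g0 s) (Idm T ?A))"
  proof -
    have "diffm T (Cmp T g0 s) (Idm T ?A) \<in> Hom T ?A ?A"
      unfolding diffm_def using add[OF g0s neg[OF idm]] .
    thus ?thesis unfolding factors_def using f2 MX ei2 neg[OF p2a] hom_dom hom_cod by metis
  qed
  show ?thesis unfolding q_iso_def using sarr g0h fac1 fac2 by blast
qed

end

theorem lemma4p2:
  fixes T :: "('o,'m) tcat" and U X V N :: "'o set"
  assumes "triangulated T"
    and "tri_subcat T N"
    and "subcat T U" and "subcat T V"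
    and "N_loc_triple T U X V N"
  shows "(frob_monic T X (U \<inter> V) \<longrightarrow> verdier T U X V N) \<and>
         (frob_epic T X (U \<inter> V) \<longrightarrow> verdier T U X V N)"
proof -
  interpret TC T using assms(1) by unfold_locales
  have XCN: "X = (U \<inter> V) \<inter> N" using assms(5) unfolding N_loc_triple_def by blast
  show ?thesis unfolding verdier_def
    using verdier_monic[OF assms(2) XCN] verdier_epic[OF assms(2) XCN] by blast
qed

end
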